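(* Let $G$ be the central product of normal subgroups $H,K$ ($G=HK$, $[H,K]=1$), $A=H\cap K$, $D$ a divisible abelian group with trivial action. Let $\theta':\operatorname{H}^2(G,D)\to \operatorname{H}^2(H,D)\oplus\operatorname{H}^2(K,D)\oplus\operatorname{Hom}(H\otimes K,D)$ and $\theta:\operatorname{H}^2(G/A,D)\to \operatorname{H}^2(H/A,D)\oplus\operatorname{H}^2(K/A,D)\oplus\operatorname{Hom}(H/A\otimes K/A,D)$ be as defined in the context ($\theta$ is an isomorphism). Let $(\operatorname{tra},\operatorname{tra},0):\operatorname{Hom}(A\cap H',D)\oplus\operatorname{Hom}(A\cap K',D)\to \operatorname{H}^2(H/A,D)\oplus\operatorname{H}^2(K/A,D)\oplus\operatorname{Hom}(H/A\otimes K/A,D)$, where the first $\operatorname{tra}$ is the transgression for the central extension $1\to A\to H\to H/A\to 1$ restricted to $\operatorname{Hom}(A\cap H',D)$ and the second is the transgression for $1\to A\to K\to K/A\to 1$ restricted to $\operatorname{Hom}(A\cap K',D)$. Then $$\operatorname{Ker}(\theta')=\{\inf(\eta)\mid \eta\in \theta^{-1}(\operatorname{Im}(\operatorname{tra},\operatorname{tra},0))\},$$ where $\inf:\operatorname{H}^2(G/A,D)\to\operatorname{H}^2(G,D)$ is inflation.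
   Context: $X\otimes Y$ denotes the abelian tensor product $X/X'\otimes_{\mathbb{Z}}Y/Y'$. Cohomology classes are represented by 2-cocycles with values in $D$ (written additively). The map $\theta'=(\operatorname{res}^G_H,\operatorname{res}^G_K,\nu)$, where for $\xi\in\operatorname{H}^2(G,D)$ represented by a 2-cocycle $f$, $\nu(\xi)\in\operatorname{Hom}(H\otimes K,D)$ is given by $\nu(\xi)(hH'\otimes kK')=f(h,k)-f(k,h)$ for $h\in H,k\in K$. Similarly, with $\bar G=G/A$, $\bar H=H/A$, $\bar K=K/A$, $\theta=(\operatorname{res}^{\bar G}_{\bar H},\operatorname{res}^{\bar G}_{\bar K},\nu_1)$ with $\nu_1(\xi)(h\bar H'\otimes k\bar K')=f(h,k)-f(k,h)$ for $h\in\bar H,k\in\bar K$; since $\bar H\cap\bar K=1$, $\theta$ is an isomorphism. *)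

theory Defs
  imports "HOL-Algebra.Algebra"
begin

text \<open>Second cohomology with coefficients in an abelian group D (the type 'd), trivial action,
  via normalised-support 2-cocycles: functions vanishing outside carrier x carrier.\<close>

definition divisible_ab :: "('d::ab_group_add) itself \<Rightarrow> bool" where
  "divisible_ab _ \<longleftrightarrow> (\<forall>y::'d. \<forall>n::nat. n > 0 \<longrightarrow> (\<exists>x. (\<Sum>i<n. x) = y))"

definition cocycles2 :: "('g,'m) monoid_scheme \<Rightarrow> ('g \<Rightarrow> 'g \<Rightarrow> 'd::ab_group_add) set" where
  "cocycles2 G = {f. (\<forall>x y. x \<notin> carrier G \<or> y \<notin> carrier G \<longrightarrow> f x y = 0) \<and>
     (\<forall>x\<in>carrier G. \<forall>y\<in>carrier G. \<forall>z\<in>carrier G.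
        f x y + f (x \<otimes>\<^bsub>G\<^esub> y) z = f y z + f x (y \<otimes>\<^bsub>G\<^esub> z))}"

definition cohom_rel :: "('g,'m) monoid_scheme \<Rightarrow> (('g \<Rightarrow> 'g \<Rightarrow> 'd::ab_group_add) \<times> ('g \<Rightarrow> 'g \<Rightarrow> 'd)) set" where
  "cohom_rel G = {(f, g). f \<in> cocycles2 G \<and> g \<in> cocycles2 G \<and>
     (\<exists>c::'g \<Rightarrow> 'd. \<forall>x\<in>carrier G. \<forall>y\<in>carrier G.
        f x y - g x y = c y - c (x \<otimes>\<^bsub>G\<^esub> y) + c x)}"

definition H2 :: "('g,'m) monoid_scheme \<Rightarrow> ('g \<Rightarrow> 'g \<Rightarrow> 'd::ab_group_add) set set" where
  "H2 G = cocycles2 G // cohom_rel G"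

definition cls :: "('g,'m) monoid_scheme \<Rightarrow> ('g \<Rightarrow> 'g \<Rightarrow> 'd::ab_group_add) \<Rightarrow> ('g \<Rightarrow> 'g \<Rightarrow> 'd) set" where
  "cls G f = cohom_rel G `` {f}"

definition rep :: "('g \<Rightarrow> 'g \<Rightarrow> 'd) set \<Rightarrow> ('g \<Rightarrow> 'g \<Rightarrow> 'd)" where
  "rep \<xi> = (SOME f. f \<in> \<xi>)"

definition res2 :: "('g,'m) monoid_scheme \<Rightarrow> ('g \<Rightarrow> 'g \<Rightarrow> 'd::ab_group_add) set \<Rightarrow> ('g \<Rightarrow> 'g \<Rightarrow> 'd) set" where
  "res2 T \<xi> = cls T (\<lambda>x y. if x \<in> carrier T \<and> y \<in> carrier T then rep \<xi> x y else 0)"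

text \<open>\<nu>(\<xi>)(h,k) = f(h,k) - f(k,h). An element of Hom(H\<otimes>K,D) is represented by the
  corresponding biadditive map H \<times> K \<rightarrow> D (zero outside H \<times> K).\<close>
definition nu :: "'g set \<Rightarrow> 'g set \<Rightarrow> ('g \<Rightarrow> 'g \<Rightarrow> 'd::ab_group_add) set \<Rightarrow> ('g \<Rightarrow> 'g \<Rightarrow> 'd)" where
  "nu H K \<xi> = (\<lambda>h k. if h \<in> H \<and> k \<in> K then rep \<xi> h k - rep \<xi> k h else 0)"

definition theta3 :: "('g,'m) monoid_scheme \<Rightarrow> ('g,'m) monoid_scheme \<Rightarrow> ('g \<Rightarrow> 'g \<Rightarrow> 'd::ab_group_add) set
     \<Rightarrow> ('g \<Rightarrow> 'g \<Rightarrow> 'd) set \<times> ('g \<Rightarrow> 'g \<Rightarrow> 'd) set \<times> ('g \<Rightarrow> 'g \<Rightarrow> 'd)" where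
  "theta3 GH GK \<xi> = (res2 GH \<xi>, res2 GK \<xi>, nu (carrier GH) (carrier GK) \<xi>)"

definition infl :: "('a,'m) monoid_scheme \<Rightarrow> 'a set \<Rightarrow> ('a set \<Rightarrow> 'a set \<Rightarrow> 'd::ab_group_add) set \<Rightarrow> ('a \<Rightarrow> 'a \<Rightarrow> 'd) set" where
  "infl G A \<eta> = cls G (\<lambda>x y. if x \<in> carrier G \<and> y \<in> carrier G
        then rep \<eta> (A #>\<^bsub>G\<^esub> x) (A #>\<^bsub>G\<^esub> y) else 0)"

definition addhom :: "('a,'m) monoid_scheme \<Rightarrow> 'a set \<Rightarrow> ('a \<Rightarrow> 'd::ab_group_add) \<Rightarrow> bool" where
  "addhom E S \<psi> \<longleftrightarrow> (\<forall>a\<in>S. \<forall>b\<in>S. \<psi> (a \<otimes>\<^bsub>E\<^esub> b) = \<psi> a + \<psi> b)"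

definition transv :: "'a set \<Rightarrow> 'a" where
  "transv S = (SOME a. a \<in> S)"

text \<open>transgression Hom(A,D) \<rightarrow> H^2(E/A,D) for a central extension 1 \<rightarrow> A \<rightarrow> E \<rightarrow> E/A \<rightarrow> 1:
  with a transversal s, tra(\<psi>) is the class of (x,y) \<mapsto> \<psi>(s(x) s(y) s(xy)^{-1}).\<close>
definition tra :: "('a,'m) monoid_scheme \<Rightarrow> 'a set \<Rightarrow> ('a \<Rightarrow> 'd::ab_group_add) \<Rightarrow> ('a set \<Rightarrow> 'a set \<Rightarrow> 'd) set" where
  "tra E A \<psi> =
     cls (E Mod A) (\<lambda>U V. if U \<in> carrier (E Mod A) \<and> V \<in> carrier (E Mod A)
        then \<psi> (transv U \<otimes>\<^bsub>E\<^esub> transv V \<otimes>\<^bsub>E\<^esub> inv\<^bsub>E\<^esub> (transv (U <#>\<^bsub>E\<^esub> V))) else 0)"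

text \<open>transgression restricted to Hom(A \<inter> E', D): \<phi> is sent to tra of an extension of \<phi>
  to a homomorphism A \<rightarrow> D (such extensions exist since D is divisible).\<close>
definition tra_res :: "('a,'m) monoid_scheme \<Rightarrow> 'a set \<Rightarrow> ('a \<Rightarrow> 'd::ab_group_add) \<Rightarrow> ('a set \<Rightarrow> 'a set \<Rightarrow> 'd) set" where
  "tra_res E A \<phi> = tra E A (SOME \<psi>. addhom E A \<psi> \<and>
       (\<forall>a \<in> A \<inter> derived E (carrier E). \<psi> a = \<phi> a))"

definition tra_res_image :: "('a,'m) monoid_scheme \<Rightarrow> 'a set \<Rightarrow> ('a set \<Rightarrow> 'a set \<Rightarrow> 'd::ab_group_add) set set" where
  "tra_res_image E A = tra_res E A ` {\<phi>. addhom E (A \<inter> derived E (carrier E)) \<phi>}"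

end

theory Submission
  imports Defs
begin

lemma coc_iff: "f \<in> cocycles2 G \<longleftrightarrow> (\<forall>x y. x \<notin> carrier G \<or> y \<notin> carrier G \<longrightarrow> f x y = 0) \<and>
     (\<forall>x\<in>carrier G. \<forall>y\<in>carrier G. \<forall>z\<in>carrier G.
        f x y + f (x \<otimes>\<^bsub>G\<^esub> y) z = f y z + f x (y \<otimes>\<^bsub>G\<^esub> z))"
  unfolding cocycles2_def by simp

lemma cocI:
  assumes "\<And>x y. x \<notin> carrier G \<or> y \<notin> carrier G \<Longrightarrow> f x y = 0"
    and "\<And>x y z. x\<in>carrier G \<Longrightarrow> y\<in>carrier G \<Longrightarrow> z\<in>carrier G \<Longrightarrow>
        f x y + f (x \<otimes>\<^bsub>G\<^esub> y) z = f y z + f x (y \<otimes>\<^bsub>G\<^esub> z)"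
  shows "f \<in> cocycles2 G"
  using assms unfolding cocycles2_def by blast

lemma cocD: "f \<in> cocycles2 G \<Longrightarrow> x\<in>carrier G \<Longrightarrow> y\<in>carrier G \<Longrightarrow> z\<in>carrier G \<Longrightarrow>
        f x y + f (x \<otimes>\<^bsub>G\<^esub> y) z = f y z + f x (y \<otimes>\<^bsub>G\<^esub> z)"
  unfolding cocycles2_def by blast

lemma cocD0: "f \<in> cocycles2 G \<Longrightarrow> x \<notin> carrier G \<or> y \<notin> carrier G \<Longrightarrow> f x y = 0"
  unfolding cocycles2_def by blast

lemma rel_iff: "(f,g) \<in> cohom_rel G \<longleftrightarrow> f \<in> cocycles2 G \<and> g \<in> cocycles2 G \<and>
     (\<exists>c. \<forall>x\<in>carrier G. \<forall>y\<in>carrier G. f x y - g x y = c y - c (x \<otimes>\<^bsub>G\<^esub> y) + c x)"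
  unfolding cohom_rel_def by simp

lemma relI: "f \<in> cocycles2 G \<Longrightarrow> g \<in> cocycles2 G \<Longrightarrow>
  (\<And>x y. x\<in>carrier G \<Longrightarrow> y\<in>carrier G \<Longrightarrow> f x y - g x y = c y - c (x \<otimes>\<^bsub>G\<^esub> y) + c x)
  \<Longrightarrow> (f,g) \<in> cohom_rel G"
  unfolding rel_iff by blast

lemma relE: assumes "(f,g) \<in> cohom_rel G"
  obtains c where "f \<in> cocycles2 G" "g \<in> cocycles2 G"
     "\<And>x y. x\<in>carrier G \<Longrightarrow> y\<in>carrier G \<Longrightarrow> f x y - g x y = c y - c (x \<otimes>\<^bsub>G\<^esub> y) + c x"
  using assms unfolding rel_iff by blast

lemma equiv_cohom: "equiv (cocycles2 G) (cohom_rel G)"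
proof (rule equivI)
  show "refl_on (cocycles2 G) (cohom_rel G)"
    unfolding refl_on_def by (auto simp: rel_iff intro!: exI[of _ "\<lambda>_. 0"])
  show "sym (cohom_rel G)"
  proof (rule symI)
    fix f g assume "(f,g) \<in> cohom_rel G"
    then obtain c where h: "f \<in> cocycles2 G" "g \<in> cocycles2 G"
      "\<And>x y. x\<in>carrier G \<Longrightarrow> y\<in>carrier G \<Longrightarrow> f x y - g x y = c y - c (x \<otimes>\<^bsub>G\<^esub> y) + c x"
      by (metis relE)
    show "(g,f) \<in> cohom_rel G"
    proof (rule relI[OF h(2,1)])
      fix x y assume "x \<in> carrier G" "y \<in> carrier G"
      with h(3)[of x y] show "g x y - f x y = (\<lambda>z. - c z) y - (\<lambda>z. - c z) (x \<otimes>\<^bsub>G\<^esub> y) + (\<lambda>z. - c z) x"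
        by (simp add: algebra_simps)
    qed
  qed
  show "trans (cohom_rel G)"
  proof (rule transI)
    fix f g h assume "(f,g) \<in> cohom_rel G" "(g,h) \<in> cohom_rel G"
    obtain c where h1: "f \<in> cocycles2 G"
      "\<And>x y. x\<in>carrier G \<Longrightarrow> y\<in>carrier G \<Longrightarrow> f x y - g x y = c y - c (x \<otimes>\<^bsub>G\<^esub> y) + c x"
      using \<open>(f,g) \<in> _\<close> by (metis relE)
    obtain d where h2: "h \<in> cocycles2 G"
      "\<And>x y. x\<in>carrier G \<Longrightarrow> y\<in>carrier G \<Longrightarrow> g x y - h x y = d y - d (x \<otimes>\<^bsub>G\<^esub> y) + d x"
      using \<open>(g,h) \<in> _\<close> by (metis relE)
    note h = h1(1) h2(1) h1(2) h2(2)
    show "(f,h) \<in> cohom_rel G"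
    proof (rule relI[OF h(1,2)])
      fix x y assume "x \<in> carrier G" "y \<in> carrier G"
      have "f x y - h x y = (f x y - g x y) + (g x y - h x y)" by (simp add: algebra_simps)
      also have "\<dots> = (c y - c (x \<otimes>\<^bsub>G\<^esub> y) + c x) + (d y - d (x \<otimes>\<^bsub>G\<^esub> y) + d x)"
        using h(3)[of x y] h(4)[of x y] \<open>x\<in>_\<close> \<open>y\<in>_\<close> by simp
      finally show "f x y - h x y = (\<lambda>z. c z + d z) y - (\<lambda>z. c z + d z) (x \<otimes>\<^bsub>G\<^esub> y) + (\<lambda>z. c z + d z) x"
        by (simp add: algebra_simps)
    qed
  qed
  show "cohom_rel G \<subseteq> cocycles2 G \<times> cocycles2 G" by (auto simp: rel_iff)
qed

lemma cls_in_H2: "f \<in> cocycles2 G \<Longrightarrow> cls G f \<in> H2 G"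
  unfolding cls_def H2_def by (rule quotientI)

lemma self_in_cls: "f \<in> cocycles2 G \<Longrightarrow> f \<in> cls G f"
  unfolding cls_def using equiv_cohom[of G] by (auto simp: equiv_def refl_on_def)

lemma H2_rep: assumes "\<xi> \<in> H2 G"
  shows "rep \<xi> \<in> \<xi>" "rep \<xi> \<in> cocycles2 G" "\<xi> = cls G (rep \<xi>)"
proof -
  obtain f where f: "\<xi> = cls G f" "f \<in> cocycles2 G"
    using assms unfolding H2_def cls_def by (auto elim: quotientE)
  have "f \<in> \<xi>" using f self_in_cls by blast
  then show "rep \<xi> \<in> \<xi>" unfolding rep_def by (metis someI_ex)
  then have "(f, rep \<xi>) \<in> cohom_rel G" using f unfolding cls_def by simp
  then show "rep \<xi> \<in> cocycles2 G" by (auto elim: relE)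
  show "\<xi> = cls G (rep \<xi>)" using \<open>(f, rep \<xi>) \<in> cohom_rel G\<close> f equiv_cohom[of G]
    unfolding cls_def by (metis equiv_class_eq)
qed

lemma cls_eqI: "(f,g) \<in> cohom_rel G \<Longrightarrow> cls G f = cls G g"
  unfolding cls_def using equiv_cohom[of G] by (metis equiv_class_eq)

lemma cls_eqD: "f \<in> cocycles2 G \<Longrightarrow> cls G f = cls G g \<Longrightarrow> (f,g) \<in> cohom_rel G"
  unfolding cls_def using equiv_cohom[of G]
  by (metis Image_singleton_iff cls_def self_in_cls sym_def equiv_def)

lemma cls_eq_iff: "f \<in> cocycles2 G \<Longrightarrow> cls G f = cls G g \<longleftrightarrow> (f,g) \<in> cohom_rel G"
  using cls_eqD cls_eqI by blast

lemma cls_nonempty_coc: "cls G g \<noteq> {} \<Longrightarrow> g \<in> cocycles2 G"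
  unfolding cls_def by (auto simp: rel_iff)

lemma zero_coc: "(\<lambda>_ _. 0) \<in> cocycles2 G"
  by (rule cocI) auto

lemma rel_anti: "(f,g) \<in> cohom_rel G \<Longrightarrow> x \<in> carrier G \<Longrightarrow> y \<in> carrier G \<Longrightarrow>
   x \<otimes>\<^bsub>G\<^esub> y = y \<otimes>\<^bsub>G\<^esub> x \<Longrightarrow> f x y - f y x = g x y - g y x"
proof -
  assume a: "(f,g) \<in> cohom_rel G" "x \<in> carrier G" "y \<in> carrier G" "x \<otimes>\<^bsub>G\<^esub> y = y \<otimes>\<^bsub>G\<^esub> x"
  obtain c where c: "\<And>x y. x\<in>carrier G \<Longrightarrow> y\<in>carrier G \<Longrightarrow> f x y - g x y = c y - c (x \<otimes>\<^bsub>G\<^esub> y) + c x"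
    using a(1) by (metis relE)
  have "(f x y - g x y) - (f y x - g y x) = 0" using c[OF a(2,3)] c[OF a(3,2)] a(4) by simp
  then show ?thesis by (simp add: algebra_simps)
qed


definition restr :: "'g set \<Rightarrow> ('g \<Rightarrow> 'g \<Rightarrow> 'd::zero) \<Rightarrow> 'g \<Rightarrow> 'g \<Rightarrow> 'd" where
  "restr S f x y = (if x \<in> S \<and> y \<in> S then f x y else 0)"

lemma res2_restr: "res2 T \<xi> = cls T (restr (carrier T) (rep \<xi>))"
  unfolding res2_def restr_def by simp

lemma restr_coc:
  assumes f: "f \<in> cocycles2 G" and S: "carrier T \<subseteq> carrier G"
    and cl: "\<And>x y. x \<in> carrier T \<Longrightarrow> y \<in> carrier T \<Longrightarrow> x \<otimes>\<^bsub>G\<^esub> y \<in> carrier T"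
    and m: "\<And>x y. x \<in> carrier T \<Longrightarrow> y \<in> carrier T \<Longrightarrow> x \<otimes>\<^bsub>T\<^esub> y = x \<otimes>\<^bsub>G\<^esub> y"
  shows "restr (carrier T) f \<in> cocycles2 T"
proof (rule cocI)
  fix x y assume "x \<notin> carrier T \<or> y \<notin> carrier T"
  then show "restr (carrier T) f x y = 0" unfolding restr_def by auto
next
  fix x y z assume xyz: "x \<in> carrier T" "y \<in> carrier T" "z \<in> carrier T"
  then show "restr (carrier T) f x y + restr (carrier T) f (x \<otimes>\<^bsub>T\<^esub> y) z =
        restr (carrier T) f y z + restr (carrier T) f x (y \<otimes>\<^bsub>T\<^esub> z)"
    unfolding restr_def using cl m cocD[OF f] S by (simp add: subset_iff)
qed

lemma restr_rel:
  assumes fg: "(f,g) \<in> cohom_rel G" and S: "carrier T \<subseteq> carrier G"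
    and cl: "\<And>x y. x \<in> carrier T \<Longrightarrow> y \<in> carrier T \<Longrightarrow> x \<otimes>\<^bsub>G\<^esub> y \<in> carrier T"
    and m: "\<And>x y. x \<in> carrier T \<Longrightarrow> y \<in> carrier T \<Longrightarrow> x \<otimes>\<^bsub>T\<^esub> y = x \<otimes>\<^bsub>G\<^esub> y"
  shows "(restr (carrier T) f, restr (carrier T) g) \<in> cohom_rel T"
proof -
  obtain c where c: "f \<in> cocycles2 G" "g \<in> cocycles2 G"
     "\<And>x y. x\<in>carrier G \<Longrightarrow> y\<in>carrier G \<Longrightarrow> f x y - g x y = c y - c (x \<otimes>\<^bsub>G\<^esub> y) + c x"
    using fg by (metis relE)
  show ?thesis
  proof (rule relI[where c=c])
    show "restr (carrier T) f \<in> cocycles2 T" by (rule restr_coc[OF c(1) S cl m])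
    show "restr (carrier T) g \<in> cocycles2 T" by (rule restr_coc[OF c(2) S cl m])
    fix x y assume "x \<in> carrier T" "y \<in> carrier T"
    then show "restr (carrier T) f x y - restr (carrier T) g x y = c y - c (x \<otimes>\<^bsub>T\<^esub> y) + c x"
      unfolding restr_def using c(3) S m by auto
  qed
qed

lemma res2_eq:
  assumes xi: "\<xi> \<in> H2 G" and f: "f \<in> \<xi>" and S: "carrier T \<subseteq> carrier G"
    and cl: "\<And>x y. x \<in> carrier T \<Longrightarrow> y \<in> carrier T \<Longrightarrow> x \<otimes>\<^bsub>G\<^esub> y \<in> carrier T"
    and m: "\<And>x y. x \<in> carrier T \<Longrightarrow> y \<in> carrier T \<Longrightarrow> x \<otimes>\<^bsub>T\<^esub> y = x \<otimes>\<^bsub>G\<^esub> y"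
  shows "res2 T \<xi> = cls T (restr (carrier T) f)"
proof -
  have "(rep \<xi>, f) \<in> cohom_rel G"
    using H2_rep[OF xi] f unfolding cls_def by (metis Image_singleton_iff)
  then show ?thesis unfolding res2_restr by (intro cls_eqI restr_rel[OF _ S cl m])
qed

definition inflf :: "('g,'m) monoid_scheme \<Rightarrow> ('g \<Rightarrow> 'q) \<Rightarrow> ('q \<Rightarrow> 'q \<Rightarrow> 'd::zero) \<Rightarrow> 'g \<Rightarrow> 'g \<Rightarrow> 'd" where
  "inflf G p F x y = (if x \<in> carrier G \<and> y \<in> carrier G then F (p x) (p y) else 0)"

lemma inflf_coc:
  assumes F: "F \<in> cocycles2 Q" and p: "\<And>x. x \<in> carrier G \<Longrightarrow> p x \<in> carrier Q"
    and pm: "\<And>x y. x \<in> carrier G \<Longrightarrow> y \<in> carrier G \<Longrightarrow> p (x \<otimes>\<^bsub>G\<^esub> y) = p x \<otimes>\<^bsub>Q\<^esub> p y"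
    and cl: "\<And>x y. x \<in> carrier G \<Longrightarrow> y \<in> carrier G \<Longrightarrow> x \<otimes>\<^bsub>G\<^esub> y \<in> carrier G"
  shows "inflf G p F \<in> cocycles2 G"
proof (rule cocI)
  fix x y assume "x \<notin> carrier G \<or> y \<notin> carrier G"
  then show "inflf G p F x y = 0" unfolding inflf_def by auto
next
  fix x y z assume xyz: "x \<in> carrier G" "y \<in> carrier G" "z \<in> carrier G"
  then show "inflf G p F x y + inflf G p F (x \<otimes>\<^bsub>G\<^esub> y) z = inflf G p F y z + inflf G p F x (y \<otimes>\<^bsub>G\<^esub> z)"
    unfolding inflf_def using cl pm p cocD[OF F, of "p x" "p y" "p z"] by simp
qed

lemma inflf_rel:
  assumes FF: "(F1,F2) \<in> cohom_rel Q" and p: "\<And>x. x \<in> carrier G \<Longrightarrow> p x \<in> carrier Q"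
    and pm: "\<And>x y. x \<in> carrier G \<Longrightarrow> y \<in> carrier G \<Longrightarrow> p (x \<otimes>\<^bsub>G\<^esub> y) = p x \<otimes>\<^bsub>Q\<^esub> p y"
    and cl: "\<And>x y. x \<in> carrier G \<Longrightarrow> y \<in> carrier G \<Longrightarrow> x \<otimes>\<^bsub>G\<^esub> y \<in> carrier G"
  shows "(inflf G p F1, inflf G p F2) \<in> cohom_rel G"
proof -
  obtain c where c: "F1 \<in> cocycles2 Q" "F2 \<in> cocycles2 Q"
     "\<And>x y. x\<in>carrier Q \<Longrightarrow> y\<in>carrier Q \<Longrightarrow> F1 x y - F2 x y = c y - c (x \<otimes>\<^bsub>Q\<^esub> y) + c x"
    using FF by (metis relE)
  show ?thesis
  proof (rule relI[where c="\<lambda>x. c (p x)"])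
    show "inflf G p F1 \<in> cocycles2 G" by (rule inflf_coc[OF c(1) p pm cl])
    show "inflf G p F2 \<in> cocycles2 G" by (rule inflf_coc[OF c(2) p pm cl])
    fix x y assume "x \<in> carrier G" "y \<in> carrier G"
    then show "inflf G p F1 x y - inflf G p F2 x y = c (p y) - c (p (x \<otimes>\<^bsub>G\<^esub> y)) + c (p x)"
      unfolding inflf_def using c(3) p pm by simp
  qed
qed

definition cobm :: "('g,'m) monoid_scheme \<Rightarrow> ('g \<Rightarrow> 'g \<Rightarrow> 'd::ab_group_add) \<Rightarrow> ('g \<Rightarrow> 'd) \<Rightarrow> 'g \<Rightarrow> 'g \<Rightarrow> 'd" where
  "cobm G f c x y = (if x \<in> carrier G \<and> y \<in> carrier G then f x y - (c y - c (x \<otimes>\<^bsub>G\<^esub> y) + c x) else 0)"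

lemma cobm_coc:
  assumes f: "f \<in> cocycles2 G"
    and cl: "\<And>x y. x \<in> carrier G \<Longrightarrow> y \<in> carrier G \<Longrightarrow> x \<otimes>\<^bsub>G\<^esub> y \<in> carrier G"
    and as: "\<And>x y z. x \<in> carrier G \<Longrightarrow> y \<in> carrier G \<Longrightarrow> z \<in> carrier G \<Longrightarrow>
       x \<otimes>\<^bsub>G\<^esub> y \<otimes>\<^bsub>G\<^esub> z = x \<otimes>\<^bsub>G\<^esub> (y \<otimes>\<^bsub>G\<^esub> z)"
  shows "cobm G f c \<in> cocycles2 G"
proof (rule cocI)
  fix x y assume "x \<notin> carrier G \<or> y \<notin> carrier G"
  then show "cobm G f c x y = 0" unfolding cobm_def by auto
next
  fix x y z assume xyz: "x \<in> carrier G" "y \<in> carrier G" "z \<in> carrier G"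
  have e: "f x y + f (x \<otimes>\<^bsub>G\<^esub> y) z = f y z + f x (y \<otimes>\<^bsub>G\<^esub> z)" using cocD[OF f xyz] .
  have "cobm G f c x y + cobm G f c (x \<otimes>\<^bsub>G\<^esub> y) z - (cobm G f c y z + cobm G f c x (y \<otimes>\<^bsub>G\<^esub> z))
     = (f x y + f (x \<otimes>\<^bsub>G\<^esub> y) z) - (f y z + f x (y \<otimes>\<^bsub>G\<^esub> z))
       + (c (x \<otimes>\<^bsub>G\<^esub> y \<otimes>\<^bsub>G\<^esub> z) - c (x \<otimes>\<^bsub>G\<^esub> (y \<otimes>\<^bsub>G\<^esub> z)))"
    unfolding cobm_def using xyz cl by (simp add: algebra_simps)
  also have "\<dots> = 0" using e as[OF xyz] by simp
  finally show "cobm G f c x y + cobm G f c (x \<otimes>\<^bsub>G\<^esub> y) z = cobm G f c y z + cobm G f c x (y \<otimes>\<^bsub>G\<^esub> z)"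
    by simp
qed

lemma cobm_rel:
  assumes f: "f \<in> cocycles2 G"
    and cl: "\<And>x y. x \<in> carrier G \<Longrightarrow> y \<in> carrier G \<Longrightarrow> x \<otimes>\<^bsub>G\<^esub> y \<in> carrier G"
    and as: "\<And>x y z. x \<in> carrier G \<Longrightarrow> y \<in> carrier G \<Longrightarrow> z \<in> carrier G \<Longrightarrow>
       x \<otimes>\<^bsub>G\<^esub> y \<otimes>\<^bsub>G\<^esub> z = x \<otimes>\<^bsub>G\<^esub> (y \<otimes>\<^bsub>G\<^esub> z)"
  shows "(f, cobm G f c) \<in> cohom_rel G"
proof (rule relI[OF f cobm_coc[OF f cl as], where c=c])
  fix x y assume "x \<in> carrier G" "y \<in> carrier G"
  then have "cobm G f c x y = f x y - (c y - c (x \<otimes>\<^bsub>G\<^esub> y) + c x)" unfolding cobm_def by simp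
  then show "f x y - cobm G f c x y = c y - c (x \<otimes>\<^bsub>G\<^esub> y) + c x" by simp
qed

lemma cobm_anti: "x \<in> carrier G \<Longrightarrow> y \<in> carrier G \<Longrightarrow> x \<otimes>\<^bsub>G\<^esub> y = y \<otimes>\<^bsub>G\<^esub> x \<Longrightarrow>
  cobm G f c x y - cobm G f c y x = f x y - f y x"
  unfolding cobm_def by (simp add: algebra_simps)


definition addG :: "'d::ab_group_add monoid" where
  "addG = \<lparr>carrier = UNIV, monoid.mult = (+), monoid.one = 0\<rparr>"

lemma addG_simps [simp]: "carrier addG = UNIV" "x \<otimes>\<^bsub>addG\<^esub> y = x + y" "\<one>\<^bsub>addG\<^esub> = 0"
  by (simp_all add: addG_def)

lemma addG_comm_group: "comm_group (addG :: 'd::ab_group_add monoid)"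
  by (rule comm_groupI) (auto simp: algebra_simps intro: exI[of _ "- x" for x])

lemma addG_group: "group (addG :: 'd::ab_group_add monoid)"
  using addG_comm_group comm_group.axioms(2) by blast

lemma addG_inv [simp]: "inv\<^bsub>addG\<^esub> (x::'d::ab_group_add) = - x"
  using group.inv_equality[OF addG_group, of "-x" x] by simp

definition zm :: "int \<Rightarrow> 'd::ab_group_add \<Rightarrow> 'd" where
  "zm n d = d [^]\<^bsub>addG\<^esub> n"

lemma zm_add: "zm (m + n) d = zm m d + zm n d"
  unfolding zm_def using group.int_pow_mult[OF addG_group, of d m n] by simp

lemma zm_0 [simp]: "zm 0 d = 0" unfolding zm_def by simp
lemma zm_1 [simp]: "zm 1 d = d" unfolding zm_def using group.int_pow_1[OF addG_group] by simp
lemma zm_neg: "zm (- n) d = - zm n d"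
  unfolding zm_def using group.int_pow_neg[OF addG_group, of d n] by simp
lemma zm_diff: "zm (m - n) d = zm m d - zm n d"
  using zm_add[of m "-n" d] zm_neg[of n d] by simp
lemma zm_mult: "zm (m * n) d = zm n (zm m d)"
  unfolding zm_def using group.int_pow_pow[OF addG_group, of d m n] by simp

lemma zm_nat: "zm (int n) d = (\<Sum>i<n. d)"
proof (induction n)
  case 0 then show ?case by simp
next
  case (Suc n)
  have "zm (int (Suc n)) d = zm (int n + 1) d" by (simp add: add.commute)
  also have "\<dots> = zm (int n) d + d" by (simp add: zm_add)
  finally show ?case using Suc by simp
qed

lemma divisible_zm: "divisible_ab TYPE('d::ab_group_add) \<Longrightarrow> n > 0 \<Longrightarrow> \<exists>x::'d. zm (int n) x = y"
  unfolding divisible_ab_def zm_nat by blast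

context group begin

lemma comm_in_derived:
  assumes "x \<in> S" "y \<in> S"
  shows "x \<otimes> y \<otimes> inv x \<otimes> inv y \<in> derived G S"
  unfolding derived_def using assms by (auto intro!: generate.incl)

lemma conj_in_derived:
  assumes S: "subgroup S G" and "x \<in> S" "w \<in> derived G S"
  shows "x \<otimes> w \<otimes> inv x \<in> derived G S"
proof -
  have sub: "subgroup (derived G S) G" using derived_is_subgroup subgroup.subset[OF S] by blast
  have WS: "derived G S \<subseteq> S" using derived_incl[OF _ S] by blast
  have xc: "x \<in> carrier G" "w \<in> carrier G" using assms WS subgroup.subset[OF S] by auto
  have "x \<otimes> w \<otimes> inv x = (x \<otimes> w \<otimes> inv x \<otimes> inv w) \<otimes> w"
    using xc by (simp add: m_assoc)
  moreover have "x \<otimes> w \<otimes> inv x \<otimes> inv w \<in> derived G S"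
    using comm_in_derived[of x S w] assms WS by auto
  ultimately show ?thesis using subgroup.m_closed[OF sub] assms(3) by metis
qed


lemma assoc_inv1 [simp]: "x \<in> carrier G \<Longrightarrow> y \<in> carrier G \<Longrightarrow> x \<otimes> (inv x \<otimes> y) = y"
  by (simp add: m_assoc[symmetric])
lemma assoc_inv2 [simp]: "x \<in> carrier G \<Longrightarrow> y \<in> carrier G \<Longrightarrow> inv x \<otimes> (x \<otimes> y) = y"
  by (simp add: m_assoc[symmetric])

lemma pow_nat_int: "0 \<le> n \<Longrightarrow> x [^] (nat n) = x [^] (n::int)"
  by (metis int_pow_int nat_0_le)

lemma cancel_helper:
  assumes "a \<in> carrier G" "b \<in> carrier G" "c \<in> carrier G" "e \<in> carrier G" "a \<otimes> b = c \<otimes> e"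
  shows "inv c \<otimes> a = e \<otimes> inv b"
proof -
  have "inv c \<otimes> a = inv c \<otimes> (a \<otimes> b) \<otimes> inv b" using assms(1-4) by (simp add: m_assoc)
  also have "\<dots> = inv c \<otimes> (c \<otimes> e) \<otimes> inv b" using assms by simp
  also have "\<dots> = e \<otimes> inv b" using assms by (simp add: m_assoc[symmetric])
  finally show ?thesis .
qed

lemma hom_extend:
  fixes \<beta> :: "'a \<Rightarrow> 'd::ab_group_add"
  assumes dv: "divisible_ab TYPE('d)"
    and S: "subgroup S G" and B: "subgroup B G" and BS: "B \<subseteq> S"
    and hom: "\<And>x y. x\<in>B \<Longrightarrow> y\<in>B \<Longrightarrow> \<beta> (x\<otimes>y) = \<beta> x + \<beta> y"
    and van: "\<And>w. w\<in>B \<Longrightarrow> w \<in> derived G S \<Longrightarrow> \<beta> w = 0"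
  shows "\<exists>\<chi>. (\<forall>x\<in>S. \<forall>y\<in>S. \<chi>(x\<otimes>y) = \<chi> x + \<chi> y) \<and> (\<forall>b\<in>B. \<chi> b = \<beta> b)"
proof -
  define W where "W = derived G S"
  have Sc: "\<And>x. x\<in>S \<Longrightarrow> x\<in>carrier G" using subgroup.subset[OF S] by blast
  have Wsub: "subgroup W G" unfolding W_def using derived_is_subgroup subgroup.subset[OF S] by blast
  have WS: "W \<subseteq> S" unfolding W_def using derived_incl[OF _ S] by blast
  have Wconj: "\<And>x w. x\<in>S \<Longrightarrow> w\<in>W \<Longrightarrow> x\<otimes>w\<otimes>inv x \<in> W"
    unfolding W_def using conj_in_derived[OF S] by blast
  have Wcomm: "\<And>x y. x\<in>S \<Longrightarrow> y\<in>S \<Longrightarrow> x\<otimes>y\<otimes>inv x\<otimes>inv y \<in> W"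
    unfolding W_def by (rule comm_in_derived)
  have Sm: "\<And>x y. x\<in>S \<Longrightarrow> y\<in>S \<Longrightarrow> x\<otimes>y\<in>S" using subgroup.m_closed[OF S] by blast
  have Si: "\<And>x. x\<in>S \<Longrightarrow> inv x\<in>S" using subgroup.m_inv_closed[OF S] by blast
  have Bm: "\<And>x y. x\<in>B \<Longrightarrow> y\<in>B \<Longrightarrow> x\<otimes>y\<in>B" using subgroup.m_closed[OF B] by blast
  have Bi: "\<And>x. x\<in>B \<Longrightarrow> inv x\<in>B" using subgroup.m_inv_closed[OF B] by blast
  have B1: "\<one> \<in> B" using subgroup.one_closed[OF B] .
  have Wm: "\<And>x y. x\<in>W \<Longrightarrow> y\<in>W \<Longrightarrow> x\<otimes>y\<in>W" using subgroup.m_closed[OF Wsub] by blast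
  have Wi: "\<And>x. x\<in>W \<Longrightarrow> inv x\<in>W" using subgroup.m_inv_closed[OF Wsub] by blast
  have W1: "\<one> \<in> W" using subgroup.one_closed[OF Wsub] .
  have Bc: "\<And>x. x\<in>B \<Longrightarrow> x\<in>carrier G" using BS Sc by blast
  have Wc: "\<And>x. x\<in>W \<Longrightarrow> x\<in>carrier G" using WS Sc by blast
  have b1: "\<beta> \<one> = 0" using hom[OF B1 B1] by simp
  have binv: "\<And>b. b\<in>B \<Longrightarrow> \<beta> (inv b) = - \<beta> b"
  proof -
    fix b assume b: "b\<in>B"
    have "\<beta> (inv b) + \<beta> b = 0" using hom[OF Bi[OF b] b] b Bc b1 by simp
    then show "\<beta> (inv b) = - \<beta> b" by (simp add: eq_neg_iff_add_eq_0)
  qed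
  define P where "P R \<longleftrightarrow> R \<subseteq> S \<times> UNIV \<and> (\<forall>x u v. (x,u)\<in>R \<longrightarrow> (x,v)\<in>R \<longrightarrow> u=v)
      \<and> (\<forall>x u y v. (x,u)\<in>R \<longrightarrow> (y,v)\<in>R \<longrightarrow> (x\<otimes>y,u+v)\<in>R)
      \<and> (\<forall>x u. (x,u)\<in>R \<longrightarrow> (inv x, -u)\<in>R) \<and> (\<forall>b\<in>B. (b, \<beta> b)\<in>R) \<and> (\<forall>w\<in>W. (w,0)\<in>R)"
    for R :: "('a \<times> 'd) set"
  define F where "F = {R. P R}"
  define R0 where "R0 = {(b\<otimes>w, \<beta> b) | b w. b\<in>B \<and> w\<in>W}"
  have R0I: "\<And>b w. b\<in>B \<Longrightarrow> w\<in>W \<Longrightarrow> (b\<otimes>w, \<beta> b) \<in> R0" unfolding R0_def by blast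
  have R0: "P R0"
    unfolding P_def
  proof (intro conjI allI impI ballI)
    show "R0 \<subseteq> S \<times> UNIV" unfolding R0_def using BS WS Sm by blast
  next
    fix x u v assume "(x,u)\<in>R0" "(x,v)\<in>R0"
    then obtain b w b' w' where bw: "b\<in>B" "w\<in>W" "b'\<in>B" "w'\<in>W" "x = b\<otimes>w" "x = b'\<otimes>w'"
      "u = \<beta> b" "v = \<beta> b'" unfolding R0_def by blast
    have "inv b' \<otimes> b = w' \<otimes> inv w" using cancel_helper[of b w b' w'] bw Bc Wc by simp
    moreover have "inv b' \<otimes> b \<in> B" using Bm Bi bw by blast
    moreover have "w' \<otimes> inv w \<in> W" using Wm Wi bw by blast
    ultimately have "inv b' \<otimes> b \<in> B \<inter> W" by simp
    then have "\<beta> (inv b' \<otimes> b) = 0" using van unfolding W_def by blast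
    then have "- \<beta> b' + \<beta> b = 0" using hom[OF Bi[OF bw(3)] bw(1)] binv[OF bw(3)] by simp
    then show "u = v" using bw by (simp add: algebra_simps)
  next
    fix x u y v assume "(x,u)\<in>R0" "(y,v)\<in>R0"
    then obtain b w b' w' where bw: "b\<in>B" "w\<in>W" "b'\<in>B" "w'\<in>W" "x = b\<otimes>w" "y = b'\<otimes>w'"
      "u = \<beta> b" "v = \<beta> b'" unfolding R0_def by blast
    have c: "b\<in>carrier G" "w\<in>carrier G" "b'\<in>carrier G" "w'\<in>carrier G" using bw Bc Wc by auto
    have "x \<otimes> y = (b\<otimes>b') \<otimes> ((inv b' \<otimes> w \<otimes> inv (inv b')) \<otimes> w')"
      using c bw by (simp add: m_assoc)
    moreover have "(inv b' \<otimes> w \<otimes> inv (inv b')) \<otimes> w' \<in> W"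
      using Wconj[OF Si[OF subsetD[OF BS bw(3)]] bw(2)] Wm bw(4) by blast
    ultimately have "(x\<otimes>y, \<beta> (b\<otimes>b')) \<in> R0" using R0I[OF Bm[OF bw(1,3)]] by metis
    then show "(x\<otimes>y, u+v) \<in> R0" using hom[OF bw(1,3)] bw by simp
  next
    fix x u assume "(x,u)\<in>R0"
    then obtain b w where bw: "b\<in>B" "w\<in>W" "x = b\<otimes>w" "u = \<beta> b" unfolding R0_def by blast
    have c: "b\<in>carrier G" "w\<in>carrier G" using bw Bc Wc by auto
    have "inv x = inv b \<otimes> (b \<otimes> inv w \<otimes> inv b)" using c bw by (simp add: m_assoc inv_mult_group)
    moreover have "b \<otimes> inv w \<otimes> inv b \<in> W" using Wconj[OF subsetD[OF BS bw(1)] Wi[OF bw(2)]] .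
    ultimately have "(inv x, \<beta> (inv b)) \<in> R0" using R0I[OF Bi[OF bw(1)]] by metis
    then show "(inv x, -u) \<in> R0" using binv[OF bw(1)] bw by simp
  next
    fix b assume "b\<in>B"
    then show "(b, \<beta> b) \<in> R0" using R0I[OF _ W1, of b] Bc by simp
  next
    fix w assume "w\<in>W"
    then show "(w, 0) \<in> R0" using R0I[OF B1, of w] Wc b1 by simp
  qed
  have chains: "\<forall>Ch\<in>chains F. \<exists>U\<in>F. \<forall>Y\<in>Ch. Y \<subseteq> U"
  proof
    fix C assume C: "C \<in> chains F"
    show "\<exists>U\<in>F. \<forall>Y\<in>C. Y \<subseteq> U"
    proof (cases "C = {}")
      case True then show ?thesis using R0 unfolding F_def by blast
    next
      case False
      then obtain R1 where R1: "R1 \<in> C" by blast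
      have PC: "\<And>R. R\<in>C \<Longrightarrow> P R" using chainsD2[OF C] unfolding F_def by blast
      have cmp: "\<And>R R'. R\<in>C \<Longrightarrow> R'\<in>C \<Longrightarrow> R \<subseteq> R' \<or> R' \<subseteq> R" using chainsD[OF C] by blast
      have P1: "\<And>R. R\<in>C \<Longrightarrow> R \<subseteq> S \<times> UNIV" using PC unfolding P_def by blast
      have P2: "\<And>R x u v. R\<in>C \<Longrightarrow> (x,u)\<in>R \<Longrightarrow> (x,v)\<in>R \<Longrightarrow> u=v"
        using PC unfolding P_def by blast
      have P3: "\<And>R x u y v. R\<in>C \<Longrightarrow> (x,u)\<in>R \<Longrightarrow> (y,v)\<in>R \<Longrightarrow> (x\<otimes>y,u+v)\<in>R"
        using PC unfolding P_def by blast
      have P4: "\<And>R x u. R\<in>C \<Longrightarrow> (x,u)\<in>R \<Longrightarrow> (inv x,-u)\<in>R"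
        using PC unfolding P_def by blast
      have P5: "\<And>b. b\<in>B \<Longrightarrow> (b, \<beta> b)\<in>R1" using PC[OF R1] unfolding P_def by blast
      have P6: "\<And>w. w\<in>W \<Longrightarrow> (w, 0)\<in>R1" using PC[OF R1] unfolding P_def by blast
      have "P (\<Union>C)" unfolding P_def
      proof (intro conjI allI impI ballI)
        show "\<Union>C \<subseteq> S \<times> UNIV" using P1 by blast
      next
        fix x u v assume "(x,u) \<in> \<Union>C" "(x,v) \<in> \<Union>C"
        then obtain Ra Rb where R: "Ra\<in>C" "Rb\<in>C" "(x,u)\<in>Ra" "(x,v)\<in>Rb" by blast
        show "u = v"
        proof (cases "Ra \<subseteq> Rb")
          case True then show ?thesis using P2[OF R(2) _ R(4)] R(3) by blast
        next
          case False then have "Rb \<subseteq> Ra" using cmp[OF R(1,2)] by blast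
          then show ?thesis using P2[OF R(1) R(3)] R(4) by blast
        qed
      next
        fix x u y v assume "(x,u) \<in> \<Union>C" "(y,v) \<in> \<Union>C"
        then obtain Ra Rb where R: "Ra\<in>C" "Rb\<in>C" "(x,u)\<in>Ra" "(y,v)\<in>Rb" by blast
        show "(x\<otimes>y,u+v) \<in> \<Union>C"
        proof (cases "Ra \<subseteq> Rb")
          case True then show ?thesis using P3[OF R(2) _ R(4)] R(2,3) by blast
        next
          case False then have "Rb \<subseteq> Ra" using cmp[OF R(1,2)] by blast
          then show ?thesis using P3[OF R(1) R(3)] R(1,4) by blast
        qed
      next
        fix x u assume "(x,u) \<in> \<Union>C"
        then show "(inv x,-u) \<in> \<Union>C" using P4 by blast
      next
        fix b assume "b\<in>B" then show "(b, \<beta> b) \<in> \<Union>C" using P5 R1 by blast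
      next
        fix w assume "w\<in>W" then show "(w, 0) \<in> \<Union>C" using P6 R1 by blast
      qed
      then show ?thesis unfolding F_def by blast
    qed
  qed
  obtain M where MF: "M \<in> F" and Mmax: "\<And>Y. Y\<in>F \<Longrightarrow> M \<subseteq> Y \<Longrightarrow> Y = M"
    using Zorn_Lemma2[OF chains] by blast
  have PM: "P M" using MF unfolding F_def by blast
  have M1: "\<And>x u. (x,u)\<in>M \<Longrightarrow> x\<in>S" using PM unfolding P_def by blast
  have M2: "\<And>x u v. (x,u)\<in>M \<Longrightarrow> (x,v)\<in>M \<Longrightarrow> u=v" using PM unfolding P_def by blast
  have M3: "\<And>x u y v. (x,u)\<in>M \<Longrightarrow> (y,v)\<in>M \<Longrightarrow> (x\<otimes>y,u+v)\<in>M" using PM unfolding P_def by blast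
  have M4: "\<And>x u. (x,u)\<in>M \<Longrightarrow> (inv x,-u)\<in>M" using PM unfolding P_def by blast
  have M5: "\<And>b. b\<in>B \<Longrightarrow> (b,\<beta> b)\<in>M" using PM unfolding P_def by blast
  have M6: "\<And>w. w\<in>W \<Longrightarrow> (w,0)\<in>M" using PM unfolding P_def by blast
  have Mone: "(\<one>, 0) \<in> M" using M6[OF W1] .
  have conjM: "\<And>x y u. x\<in>S \<Longrightarrow> (y,u)\<in>M \<Longrightarrow> (x\<otimes>y\<otimes>inv x, u)\<in>M"
  proof -
    fix x y u assume x: "x\<in>S" and yu: "(y,u)\<in>M"
    have y: "y\<in>S" using M1[OF yu] .
    have "(x\<otimes>y\<otimes>inv x\<otimes>inv y \<otimes> y, 0 + u) \<in> M" using M3[OF M6[OF Wcomm[OF x y]] yu] .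
    moreover have "x\<otimes>y\<otimes>inv x\<otimes>inv y \<otimes> y = x\<otimes>y\<otimes>inv x" using Sc x y by (simp add: m_assoc)
    ultimately show "(x\<otimes>y\<otimes>inv x, u)\<in>M" by simp
  qed
  have powM_nat: "\<And>x u (k::nat). (x,u)\<in>M \<Longrightarrow> (x [^] k, zm (int k) u) \<in> M"
  proof -
    fix x u and k :: nat assume xu: "(x,u)\<in>M"
    show "(x [^] k, zm (int k) u) \<in> M"
    proof (induction k)
      case 0 then show ?case using Mone by simp
    next
      case (Suc k)
      have "zm (int (Suc k)) u = zm (int k) u + u" using zm_add[of "int k" 1 u] by (simp add: add.commute)
      then show ?case using M3[OF Suc xu] by simp
    qed
  qed
  have powM: "\<And>x u (n::int). (x,u)\<in>M \<Longrightarrow> (x [^] n, zm n u) \<in> M"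
  proof -
    fix x u and n :: int assume xu: "(x,u)\<in>M"
    have xc: "x \<in> carrier G" using Sc M1 xu by blast
    show "(x [^] n, zm n u) \<in> M"
    proof (cases "n \<ge> 0")
      case True
      then obtain k where "n = int k" by (metis nonneg_eq_int)
      then show ?thesis using powM_nat[OF xu, of k] by (simp add: int_pow_int)
    next
      case False
      then obtain k where k: "n = - int k" by (metis neg_int_cases less_le not_le nonneg_eq_int minus_minus neg_0_le_iff_le)
      have "x [^] n = inv (x [^] k)" using k int_pow_neg_int[OF xc] by simp
      moreover have "zm n u = - zm (int k) u" using k zm_neg by simp
      ultimately show ?thesis using M4[OF powM_nat[OF xu, of k]] by simp
    qed
  qed
  have dom: "\<forall>g\<in>S. \<exists>u. (g,u)\<in>M"
  proof (rule ccontr)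
    assume "\<not> (\<forall>g\<in>S. \<exists>u. (g,u)\<in>M)"
    then obtain g where g: "g\<in>S" and gn: "\<And>u. (g,u)\<notin>M" by blast
    have gc: "g \<in> carrier G" using Sc g .
    have gpS: "\<And>n::int. g [^] n \<in> S" using subgroup_int_pow_closed[OF S g] by blast
    define Z where "Z = {n::nat. n > 0 \<and> (\<exists>u. (g [^] n, u) \<in> M)}"
    obtain d where dprop: "\<And>(n::int) u. (g [^] n, u)\<in>M \<Longrightarrow> (g [^] n, zm n d) \<in> M"
    proof (cases "Z = {}")
      case True
      show ?thesis
      proof (rule that[of 0])
        fix n :: int and u assume nu: "(g [^] n, u)\<in>M"
        have "n = 0"
        proof (rule ccontr)
          assume "n \<noteq> 0"
          then consider "n > 0" | "n < 0" by linarith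
          then show False
          proof cases
            case 1
            then have "nat n \<in> Z" unfolding Z_def using nu pow_nat_int[of n g] by auto
            then show False using True by blast
          next
            case 2
            have "g [^] (- n) = inv (g [^] n)" using int_pow_neg[OF gc, of n] by simp
            then have "(g [^] (-n), -u) \<in> M" using M4[OF nu] by simp
            then have "nat (-n) \<in> Z" unfolding Z_def using 2 pow_nat_int[of "-n" g] by auto
            then show False using True by blast
          qed
        qed
        then show "(g [^] n, zm n 0) \<in> M" using Mone by simp
      qed
    next
      case False
      define n0 where "n0 = Least (\<lambda>n. n \<in> Z)"
      have n0Z: "n0 \<in> Z" unfolding n0_def using False by (metis LeastI ex_in_conv)
      have n0min: "\<And>m. m \<in> Z \<Longrightarrow> n0 \<le> m" unfolding n0_def by (rule Least_le)
      obtain u0 where u0: "(g [^] n0, u0) \<in> M" and n0pos: "n0 > 0" using n0Z unfolding Z_def by blast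
      obtain d where d: "zm (int n0) d = u0" using divisible_zm[OF dv n0pos] by blast
      show ?thesis
      proof (rule that[of d])
        fix n :: int and u assume nu: "(g [^] n, u)\<in>M"
        define q where "q = n div int n0"
        define r where "r = n mod int n0"
        have nqr: "n = int n0 * q + r" unfolding q_def r_def by simp
        have r0: "0 \<le> r" "r < int n0" unfolding r_def using n0pos by simp_all
        have gq: "(g [^] (int n0 * q), zm q u0) \<in> M"
          using powM[OF u0, of q] int_pow_pow[OF gc, of "int n0" q] by (simp add: int_pow_int)
        have "g [^] n = g [^] (int n0 * q) \<otimes> g [^] r" using nqr int_pow_mult[OF gc] by simp
        then have "g [^] r = inv (g [^] (int n0 * q)) \<otimes> g [^] n"
          using gc by (simp add: m_assoc[symmetric])
        then have gr: "(g [^] r, - zm q u0 + u) \<in> M" using M3[OF M4[OF gq] nu] by simp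
        have "r = 0"
        proof (rule ccontr)
          assume "r \<noteq> 0"
          then have "nat r \<in> Z" unfolding Z_def using gr r0 pow_nat_int[of r g] by auto
          then show False using n0min[of "nat r"] r0 by linarith
        qed
        then have "n = int n0 * q" using nqr by simp
        moreover have "zm (int n0 * q) d = zm q u0" using zm_mult[of "int n0" q d] d by simp
        ultimately show "(g [^] n, zm n d) \<in> M" using gq by simp
      qed
    qed
    define M' where "M' = {(s \<otimes> g [^] n, u + zm n d) | s u (n::int). (s,u)\<in>M}"
    have MM': "M \<subseteq> M'"
    proof
      fix p assume "p \<in> M"
      then obtain s u where p: "p = (s,u)" "(s,u)\<in>M" by (cases p) auto
      have "s \<otimes> g [^] (0::int) = s" using Sc M1 p by simp
      then show "p \<in> M'" unfolding M'_def using p by (metis (mono_tags, lifting) add_0_right mem_Collect_eq zm_0)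
    qed
    have gM': "(g, zm 1 d) \<in> M'"
    proof -
      have "\<one> \<otimes> g [^] (1::int) = g" using gc by simp
      then show ?thesis unfolding M'_def using Mone by (metis (mono_tags, lifting) add_0_left mem_Collect_eq)
    qed
    have "P M'" unfolding P_def
    proof (intro conjI allI impI ballI)
      show "M' \<subseteq> S \<times> UNIV" unfolding M'_def using M1 gpS Sm by blast
    next
      fix x v1 v2 assume "(x,v1)\<in>M'" "(x,v2)\<in>M'"
      then obtain s u n s' u' m where h: "(s,u)\<in>M" "(s',u')\<in>M" "x = s \<otimes> g [^] (n::int)"
        "x = s' \<otimes> g [^] (m::int)" "v1 = u + zm n d" "v2 = u' + zm m d" unfolding M'_def by blast
      have c: "s \<in> carrier G" "s' \<in> carrier G" using h M1 Sc by blast+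
      have "inv s' \<otimes> s = g [^] m \<otimes> inv (g [^] n)"
        using cancel_helper[of s "g [^] n" s' "g [^] m"] c gc h by simp
      also have "\<dots> = g [^] (m - n)" using int_pow_diff[OF gc] by simp
      finally have "(g [^] (m - n), - u' + u) \<in> M" using M3[OF M4[OF h(2)] h(1)] by simp
      then have "(g [^] (m - n), zm (m - n) d) \<in> M" by (rule dprop)
      with \<open>(g [^] (m - n), - u' + u) \<in> M\<close> have "- u' + u = zm (m - n) d" using M2 by blast
      then show "v1 = v2" using h zm_diff[of m n d] by (simp add: algebra_simps)
    next
      fix x v y w assume "(x,v)\<in>M'" "(y,w)\<in>M'"
      then obtain s u n s' u' m where h: "(s,u)\<in>M" "(s',u')\<in>M" "x = s \<otimes> g [^] (n::int)"
        "y = s' \<otimes> g [^] (m::int)" "v = u + zm n d" "w = u' + zm m d" unfolding M'_def by blast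
      have c: "s \<in> carrier G" "s' \<in> carrier G" using h M1 Sc by blast+
      have gn: "g [^] n \<in> carrier G" "g [^] m \<in> carrier G" using gc by auto
      have "x \<otimes> y = (s \<otimes> (g [^] n \<otimes> s' \<otimes> inv (g [^] n))) \<otimes> (g [^] n \<otimes> g [^] m)"
        using h c gn by (simp add: m_assoc)
      also have "\<dots> = (s \<otimes> (g [^] n \<otimes> s' \<otimes> inv (g [^] n))) \<otimes> g [^] (n + m)"
        using int_pow_mult[OF gc] by simp
      finally have xy: "x \<otimes> y = (s \<otimes> (g [^] n \<otimes> s' \<otimes> inv (g [^] n))) \<otimes> g [^] (n + m)" .
      have "(s \<otimes> (g [^] n \<otimes> s' \<otimes> inv (g [^] n)), u + u') \<in> M"
        using M3[OF h(1) conjM[OF gpS h(2)]] .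
      then have "(x \<otimes> y, (u + u') + zm (n + m) d) \<in> M'" unfolding M'_def using xy by blast
      moreover have "(u + u') + zm (n + m) d = v + w" using h zm_add[of n m d] by (simp add: algebra_simps)
      ultimately show "(x \<otimes> y, v + w) \<in> M'" by simp
    next
      fix x v assume "(x,v)\<in>M'"
      then obtain s u n where h: "(s,u)\<in>M" "x = s \<otimes> g [^] (n::int)" "v = u + zm n d"
        unfolding M'_def by blast
      have c: "s \<in> carrier G" using h M1 Sc by blast
      have gn: "g [^] n \<in> carrier G" using gc by auto
      have "inv x = (inv (g [^] n) \<otimes> inv s \<otimes> inv (inv (g [^] n))) \<otimes> g [^] (- n)"
        using h c gn int_pow_neg[OF gc, of n] by (simp add: m_assoc inv_mult_group)
      moreover have "(inv (g [^] n) \<otimes> inv s \<otimes> inv (inv (g [^] n)), - u) \<in> M"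
        using conjM[OF Si[OF gpS] M4[OF h(1)]] .
      ultimately have "(inv x, - u + zm (- n) d) \<in> M'" unfolding M'_def by blast
      moreover have "- u + zm (- n) d = - v" using h zm_neg[of n d] by simp
      ultimately show "(inv x, - v) \<in> M'" by simp
    next
      fix b assume "b \<in> B" then show "(b, \<beta> b) \<in> M'" using M5 MM' by blast
    next
      fix w assume "w \<in> W" then show "(w, 0) \<in> M'" using M6 MM' by blast
    qed
    then have "M' = M" using Mmax MM' unfolding F_def by blast
    then show False using gM' gn by blast
  qed
  define \<chi> where "\<chi> x = (THE u. (x,u)\<in>M)" for x
  have chi: "\<And>x. x\<in>S \<Longrightarrow> (x, \<chi> x) \<in> M"
  proof -
    fix x assume "x\<in>S"
    then obtain u where "(x,u)\<in>M" using dom by blast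
    then show "(x, \<chi> x) \<in> M" unfolding \<chi>_def using M2 by (metis theI)
  qed
  show ?thesis
  proof (intro exI conjI ballI)
    fix x y assume "x\<in>S" "y\<in>S"
    then show "\<chi> (x\<otimes>y) = \<chi> x + \<chi> y" using M2 M3 chi Sm by metis
  next
    fix b assume "b\<in>B"
    then show "\<chi> b = \<beta> b" using M2 M5 chi BS by blast
  qed
qed

end


locale cp = group G for G (structure) +
  fixes H K :: "'a set"
  assumes nH: "H \<lhd> G" and nK: "K \<lhd> G" and HK: "H <#> K = carrier G"
    and cm: "\<And>h k. h\<in>H \<Longrightarrow> k\<in>K \<Longrightarrow> h \<otimes> k = k \<otimes> h"
begin

abbreviation A where "A \<equiv> H \<inter> K"

lemma sH: "subgroup H G" using nH normal_imp_subgroup by blast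
lemma sK: "subgroup K G" using nK normal_imp_subgroup by blast
lemma Hc: "H \<subseteq> carrier G" using sH subgroup.subset by blast
lemma Kc: "K \<subseteq> carrier G" using sK subgroup.subset by blast
lemma nA: "A \<lhd> G" by (rule normal_subgroup_intersect[OF nH nK])
lemma sA: "subgroup A G" using nA normal_imp_subgroup by blast
lemma Ac: "a \<in> A \<Longrightarrow> a \<in> carrier G" using Hc by blast

lemma decomp: assumes "x \<in> carrier G" obtains h k where "h\<in>H" "k\<in>K" "x = h \<otimes> k"
  using assms HK[symmetric] unfolding set_mult_def by blast

lemma central: assumes a: "a \<in> A" and x: "x \<in> carrier G" shows "a \<otimes> x = x \<otimes> a"
proof -
  obtain h k where hk: "h\<in>H" "k\<in>K" "x = h \<otimes> k" using decomp[OF x] by blast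
  have c: "a \<in> carrier G" "h \<in> carrier G" "k \<in> carrier G" using a hk Hc Kc by auto
  have "a \<otimes> x = (a \<otimes> h) \<otimes> k" using hk c by (simp add: m_assoc)
  also have "\<dots> = (h \<otimes> a) \<otimes> k" using cm[of h a] hk a by simp
  also have "\<dots> = h \<otimes> (a \<otimes> k)" using c by (simp add: m_assoc)
  also have "\<dots> = h \<otimes> (k \<otimes> a)" using cm[of a k] hk a by simp
  also have "\<dots> = x \<otimes> a" using hk c by (simp add: m_assoc)
  finally show ?thesis .
qed

lemma Am: "a \<in> A \<Longrightarrow> b \<in> A \<Longrightarrow> a \<otimes> b \<in> A" using subgroup.m_closed[OF sA] by blast
lemma Ai: "a \<in> A \<Longrightarrow> inv a \<in> A" using subgroup.m_inv_closed[OF sA] by blast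
lemma A1: "\<one> \<in> A" using subgroup.one_closed[OF sA] .

lemma rcos_mem: "x \<in> carrier G \<Longrightarrow> x \<in> A #> x" using rcos_self[OF _ sA] .

lemma rcos_elem: "y \<in> A #> x \<Longrightarrow> \<exists>a\<in>A. y = a \<otimes> x" unfolding r_coset_def by blast

lemma rcos_eq: "x \<in> carrier G \<Longrightarrow> y \<in> A #> x \<Longrightarrow> A #> y = A #> x"
  using repr_independence[OF _ _ sA] by metis

lemma rcos_mult: "x \<in> carrier G \<Longrightarrow> y \<in> carrier G \<Longrightarrow> (A #> x) <#> (A #> y) = A #> (x \<otimes> y)"
  using normal.rcos_sum[OF nA] by blast

lemma rcos_right: assumes "a \<in> A" "x \<in> carrier G" shows "A #> (x \<otimes> a) = A #> x"
proof -
  have "x \<otimes> a \<in> A #> x" using assms central[of a x] unfolding r_coset_def by (auto intro!: bexI[of _ a])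
  then show ?thesis using rcos_eq assms by blast
qed

lemma rcos_eq_iff: assumes "x \<in> carrier G" "y \<in> carrier G"
  shows "A #> x = A #> y \<longleftrightarrow> (\<exists>a\<in>A. y = x \<otimes> a)"
proof
  assume "A #> x = A #> y"
  then have "y \<in> A #> x" using rcos_mem[OF assms(2)] by simp
  then obtain a where "a\<in>A" "y = a \<otimes> x" using rcos_elem by blast
  then show "\<exists>a\<in>A. y = x \<otimes> a" using central assms by metis
next
  assume "\<exists>a\<in>A. y = x \<otimes> a"
  then show "A #> x = A #> y" using rcos_right assms by metis
qed

lemma Q_group: "group (G Mod A)" using normal.factorgroup_is_group[OF nA] .

lemma carrierQ: "carrier (G Mod A) = (\<lambda>x. A #> x) ` carrier G"
  by (rule carrier_FactGroup)

lemma carrierQS: "carrier (G\<lparr>carrier := S\<rparr> Mod A) = (\<lambda>x. A #> x) ` S"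
  using carrier_FactGroup[of "G\<lparr>carrier := S\<rparr>" A] by simp

lemma multQ: "U \<otimes>\<^bsub>G Mod A\<^esub> V = U <#> V" by simp
lemma multQS: "U \<otimes>\<^bsub>G\<lparr>carrier := S\<rparr> Mod A\<^esub> V = U <#> V" by simp

lemma transv_mem: assumes "x \<in> carrier G" shows "transv (A #> x) \<in> A #> x"
  using rcos_mem[OF assms] unfolding transv_def by (metis someI_ex)

lemma transv_c: assumes "x \<in> carrier G" shows "transv (A #> x) \<in> carrier G"
  using transv_mem[OF assms] r_coset_subset_G[of A x] Ac assms by blast

lemma transv_rcos: assumes "x \<in> carrier G" shows "A #> transv (A #> x) = A #> x"
  using rcos_eq[OF assms transv_mem[OF assms]] .

definition alpha :: "'a \<Rightarrow> 'a" where "alpha x = transv (A #> x) \<otimes> inv x"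

lemma alpha_A: assumes "x \<in> carrier G" shows "alpha x \<in> A"
proof -
  obtain a where "a\<in>A" "transv (A #> x) = a \<otimes> x" using rcos_elem transv_mem[OF assms] by blast
  then show ?thesis unfolding alpha_def using assms Ac by (simp add: m_assoc)
qed

lemma transv_alpha: assumes "x \<in> carrier G" shows "transv (A #> x) = alpha x \<otimes> x"
  unfolding alpha_def using assms transv_c[OF assms] by (simp add: m_assoc)

lemma tr_calc: assumes x: "x \<in> carrier G" and y: "y \<in> carrier G"
  shows "transv (A #> x) \<otimes> transv (A #> y) \<otimes> inv (transv (A #> (x \<otimes> y)))
       = alpha x \<otimes> alpha y \<otimes> inv (alpha (x \<otimes> y))"
proof -
  have xy: "x \<otimes> y \<in> carrier G" using x y by simp
  have a: "alpha x \<in> carrier G" "alpha y \<in> carrier G" "alpha (x \<otimes> y) \<in> carrier G"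
    using alpha_A Ac x y xy by blast+
  have "transv (A #> x) \<otimes> transv (A #> y) \<otimes> inv (transv (A #> (x \<otimes> y)))
     = alpha x \<otimes> x \<otimes> (alpha y \<otimes> y) \<otimes> inv (alpha (x \<otimes> y) \<otimes> (x \<otimes> y))"
    using transv_alpha x y xy by simp
  also have "\<dots> = alpha x \<otimes> (x \<otimes> alpha y) \<otimes> y \<otimes> (inv (x \<otimes> y) \<otimes> inv (alpha (x \<otimes> y)))"
    using a x y xy by (simp add: m_assoc inv_mult_group)
  also have "\<dots> = alpha x \<otimes> (alpha y \<otimes> x) \<otimes> y \<otimes> (inv (x \<otimes> y) \<otimes> inv (alpha (x \<otimes> y)))"
    using central[OF alpha_A[OF y] x] by simp
  also have "\<dots> = alpha x \<otimes> alpha y \<otimes> ((x \<otimes> y) \<otimes> inv (x \<otimes> y)) \<otimes> inv (alpha (x \<otimes> y))"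
    using a x y xy by (simp add: m_assoc)
  also have "\<dots> = alpha x \<otimes> alpha y \<otimes> inv (alpha (x \<otimes> y))"
    using a x y xy by simp
  finally show ?thesis .
qed

lemma derived_A: "w \<in> derived G A \<Longrightarrow> w = \<one>"
proof -
  assume w: "w \<in> derived G A"
  have cg: "comm_group (G\<lparr>carrier := A\<rparr>)"
  proof -
    interpret gA: group "G\<lparr>carrier := A\<rparr>" using subgroup.subgroup_is_group[OF sA is_group] .
    show ?thesis by (rule gA.group_comm_groupI) (use central Ac in auto)
  qed
  have "derived (G\<lparr>carrier := A\<rparr>) A = derived G A" using derived_consistent[OF _ sA] by blast
  moreover have "derived (G\<lparr>carrier := A\<rparr>) A = {\<one>\<^bsub>G\<lparr>carrier := A\<rparr>\<^esub>}"
    using comm_group.derived_eq_singleton[OF cg] by simp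
  ultimately have "derived G A = {\<one>}" by simp
  then show "w = \<one>" using w by blast
qed

end


context cp begin

lemma pair_add:
  assumes f: "f \<in> cocycles2 G" and a: "a \<in> A" and x: "x \<in> carrier G" and y: "y \<in> carrier G"
  shows "f a (x \<otimes> y) - f (x \<otimes> y) a = (f a x - f x a) + (f a y - f y a)"
proof -
  have ac: "a \<in> carrier G" using Ac a .
  have E1: "f a x + f (x \<otimes> a) y - f x y - f a (x \<otimes> y) = 0"
    using cocD[OF f ac x y] central[OF a x] by (simp add: algebra_simps)
  have E2: "f x a + f (x \<otimes> a) y - f a y - f x (a \<otimes> y) = 0"
    using cocD[OF f x ac y] by (simp add: algebra_simps)
  have E3: "f x y + f (x \<otimes> y) a - f y a - f x (a \<otimes> y) = 0"
    using cocD[OF f x y ac] central[OF a y] by (simp add: algebra_simps)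
  have "f a (x \<otimes> y) - f (x \<otimes> y) a - ((f a x - f x a) + (f a y - f y a))
     = - (f a x + f (x \<otimes> a) y - f x y - f a (x \<otimes> y))
       + (f x a + f (x \<otimes> a) y - f a y - f x (a \<otimes> y))
       - (f x y + f (x \<otimes> y) a - f y a - f x (a \<otimes> y))" by (simp add: algebra_simps)
  also have "\<dots> = 0" using E1 E2 E3 by simp
  finally show ?thesis by simp
qed

lemma pair_zero:
  assumes f: "f \<in> cocycles2 G"
    and fH: "\<And>x y. x \<in> H \<Longrightarrow> y \<in> H \<Longrightarrow> f x y = 0"
    and fK: "\<And>x y. x \<in> K \<Longrightarrow> y \<in> K \<Longrightarrow> f x y = c3 y - c3 (x \<otimes> y) + c3 x"
    and a: "a \<in> A" and x: "x \<in> carrier G"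
  shows "f a x = f x a"
proof -
  obtain h k where hk: "h\<in>H" "k\<in>K" "x = h \<otimes> k" using decomp[OF x] by blast
  have "f a x - f x a = (f a h - f h a) + (f a k - f k a)"
    using pair_add[OF f a, of h k] hk Hc Kc by auto
  moreover have "f a h - f h a = 0" using fH a hk by simp
  moreover have "f a k - f k a = 0" using fK[of a k] fK[of k a] a hk cm[of a k] by simp
  ultimately show ?thesis by simp
qed

lemma pi_in_Q: "x \<in> carrier G \<Longrightarrow> A #> x \<in> carrier (G Mod A)"
  using carrierQ by blast

lemma pi_mult: "x \<in> carrier G \<Longrightarrow> y \<in> carrier G \<Longrightarrow> A #> (x \<otimes> y) = (A #> x) \<otimes>\<^bsub>G Mod A\<^esub> (A #> y)"
  using rcos_mult by simp

lemma Q_elem: "U \<in> carrier (G Mod A) \<Longrightarrow> transv U \<in> carrier G \<and> A #> transv U = U"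
  using carrierQ transv_c transv_rcos by auto

end

locale desc = cp +
  fixes f0 :: "'a \<Rightarrow> 'a \<Rightarrow> 'd::ab_group_add"
  assumes f0c: "f0 \<in> cocycles2 G"
    and f0A: "\<And>a b. a\<in>A \<Longrightarrow> b\<in>A \<Longrightarrow> f0 a b = 0"
    and pz: "\<And>a x. a\<in>A \<Longrightarrow> x\<in>carrier G \<Longrightarrow> f0 a x = f0 x a"
begin

definition cc :: "'a \<Rightarrow> 'd" where
  "cc z = - f0 (transv (A #> z)) (inv (transv (A #> z)) \<otimes> z)"

definition f1 :: "'a \<Rightarrow> 'a \<Rightarrow> 'd" where "f1 = cobm G f0 cc"

lemma P1: assumes x: "x \<in> carrier G" and y: "y \<in> carrier G" and a: "a \<in> A"
  shows "f0 (x \<otimes> a) y = f0 x y + f0 (x \<otimes> y) a - f0 x a"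
proof -
  have ac: "a \<in> carrier G" using Ac a .
  have "f0 x a + f0 (x \<otimes> a) y = f0 a y + f0 x (a \<otimes> y)" using cocD[OF f0c x ac y] .
  moreover have "f0 x y + f0 (x \<otimes> y) a = f0 y a + f0 x (y \<otimes> a)" using cocD[OF f0c x y ac] .
  moreover have "a \<otimes> y = y \<otimes> a" using central a y by blast
  moreover have "f0 a y = f0 y a" using pz a y by blast
  ultimately show ?thesis by (simp add: algebra_simps)
qed

lemma P2: assumes x: "x \<in> carrier G" and y: "y \<in> carrier G" and a: "a \<in> A"
  shows "f0 x (y \<otimes> a) = f0 x y + f0 (x \<otimes> y) a - f0 y a"
  using cocD[OF f0c x y Ac[OF a]] by (simp add: algebra_simps)

lemma P3: assumes z: "z \<in> carrier G" and a: "a \<in> A" and b: "b \<in> A"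
  shows "f0 z (a \<otimes> b) = f0 z a + f0 (z \<otimes> a) b"
  using cocD[OF f0c z Ac[OF a] Ac[OF b]] f0A[OF a b] by simp

lemma cc_shift: assumes z: "z \<in> carrier G" and a: "a \<in> A"
  shows "cc (z \<otimes> a) = cc z - f0 z a"
proof -
  define \<sigma> where "\<sigma> = transv (A #> z)"
  have s1: "transv (A #> (z \<otimes> a)) = \<sigma>" unfolding \<sigma>_def using rcos_right[OF a z] by simp
  have sc: "\<sigma> \<in> carrier G" unfolding \<sigma>_def using transv_c[OF z] .
  define b where "b = inv \<sigma> \<otimes> z"
  have al: "alpha z \<in> A" "inv (alpha z) \<in> A" using alpha_A[OF z] Ai by auto
  have alc: "alpha z \<in> carrier G" "inv (alpha z) \<in> carrier G" using al Ac by auto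
  have "b = inv z \<otimes> (inv (alpha z) \<otimes> z)" unfolding b_def \<sigma>_def using transv_alpha[OF z] alc z
    by (simp add: inv_mult_group m_assoc)
  also have "\<dots> = inv z \<otimes> (z \<otimes> inv (alpha z))" using central[OF al(2) z] by simp
  also have "\<dots> = inv (alpha z)" using alc z by simp
  finally have bA: "b \<in> A" using al by simp
  have ac: "a \<in> carrier G" using Ac a .
  have e1: "inv \<sigma> \<otimes> (z \<otimes> a) = b \<otimes> a" unfolding b_def using sc z ac by (simp add: m_assoc)
  have e2: "\<sigma> \<otimes> b = z" unfolding b_def using sc z by simp
  have "cc (z \<otimes> a) = - f0 \<sigma> (b \<otimes> a)" unfolding cc_def using s1 e1 by simp
  also have "\<dots> = - (f0 \<sigma> b + f0 z a)" using P3[OF sc bA a] e2 by simp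
  also have "\<dots> = cc z - f0 z a" unfolding cc_def \<sigma>_def[symmetric] b_def by simp
  finally show ?thesis .
qed

lemma f1_c: "f1 \<in> cocycles2 G"
  unfolding f1_def by (rule cobm_coc[OF f0c]) (auto simp: m_assoc)

lemma f1_rel: "(f0, f1) \<in> cohom_rel G"
  unfolding f1_def by (rule cobm_rel[OF f0c]) (auto simp: m_assoc)

lemma inv1: assumes x: "x \<in> carrier G" and y: "y \<in> carrier G" and a: "a \<in> A"
  shows "f1 (x \<otimes> a) y = f1 x y"
proof -
  have ac: "a \<in> carrier G" using Ac a .
  have xay: "x \<otimes> a \<otimes> y = (x \<otimes> y) \<otimes> a" using central[OF a y] x y ac by (simp add: m_assoc)
  have "f1 (x \<otimes> a) y = f0 (x \<otimes> a) y - (cc y - cc ((x \<otimes> y) \<otimes> a) + cc (x \<otimes> a))"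
    unfolding f1_def cobm_def using x y ac xay by simp
  also have "\<dots> = (f0 x y + f0 (x \<otimes> y) a - f0 x a) - (cc y - (cc (x \<otimes> y) - f0 (x \<otimes> y) a) + (cc x - f0 x a))"
    using P1[OF x y a] cc_shift[OF _ a, of "x \<otimes> y"] cc_shift[OF x a] x y by simp
  also have "\<dots> = f0 x y - (cc y - cc (x \<otimes> y) + cc x)" by (simp add: algebra_simps)
  also have "\<dots> = f1 x y" unfolding f1_def cobm_def using x y by simp
  finally show ?thesis .
qed

lemma inv2: assumes x: "x \<in> carrier G" and y: "y \<in> carrier G" and a: "a \<in> A"
  shows "f1 x (y \<otimes> a) = f1 x y"
proof -
  have ac: "a \<in> carrier G" using Ac a .
  have xya: "x \<otimes> (y \<otimes> a) = (x \<otimes> y) \<otimes> a" using x y ac by (simp add: m_assoc)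
  have "f1 x (y \<otimes> a) = f0 x (y \<otimes> a) - (cc (y \<otimes> a) - cc ((x \<otimes> y) \<otimes> a) + cc x)"
    unfolding f1_def cobm_def using x y ac xya by simp
  also have "\<dots> = (f0 x y + f0 (x \<otimes> y) a - f0 y a) - ((cc y - f0 y a) - (cc (x \<otimes> y) - f0 (x \<otimes> y) a) + cc x)"
    using P2[OF x y a] cc_shift[OF _ a, of "x \<otimes> y"] cc_shift[OF y a] x y by simp
  also have "\<dots> = f0 x y - (cc y - cc (x \<otimes> y) + cc x)" by (simp add: algebra_simps)
  also have "\<dots> = f1 x y" unfolding f1_def cobm_def using x y by simp
  finally show ?thesis .
qed

lemma f1_inv: assumes "x \<in> carrier G" "x' \<in> carrier G" "y \<in> carrier G" "y' \<in> carrier G"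
   "A #> x = A #> x'" "A #> y = A #> y'"
  shows "f1 x' y' = f1 x y"
proof -
  obtain a b where "a\<in>A" "x' = x \<otimes> a" "b\<in>A" "y' = y \<otimes> b" using rcos_eq_iff assms by meson
  then show ?thesis using inv1 inv2 assms by simp
qed

definition FF :: "'a set \<Rightarrow> 'a set \<Rightarrow> 'd" where
  "FF U V = (if U \<in> carrier (G Mod A) \<and> V \<in> carrier (G Mod A) then f1 (transv U) (transv V) else 0)"

lemma FF_c: "FF \<in> cocycles2 (G Mod A)"
proof (rule cocI)
  fix U V assume "U \<notin> carrier (G Mod A) \<or> V \<notin> carrier (G Mod A)"
  then show "FF U V = 0" unfolding FF_def by auto
next
  fix U V W assume UVW: "U \<in> carrier (G Mod A)" "V \<in> carrier (G Mod A)" "W \<in> carrier (G Mod A)"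
  define u v w where "u = transv U" "v = transv V" "w = transv W"
  have c: "u \<in> carrier G" "v \<in> carrier G" "w \<in> carrier G" "A #> u = U" "A #> v = V" "A #> w = W"
    using Q_elem UVW unfolding u_v_w_def by auto
  have UV: "U \<otimes>\<^bsub>G Mod A\<^esub> V = A #> (u \<otimes> v)" using pi_mult c by simp
  have VW: "V \<otimes>\<^bsub>G Mod A\<^esub> W = A #> (v \<otimes> w)" using pi_mult c by simp
  have UVc: "A #> (u \<otimes> v) \<in> carrier (G Mod A)" "A #> (v \<otimes> w) \<in> carrier (G Mod A)"
    using pi_in_Q c by auto
  have t1: "f1 (transv (A #> (u \<otimes> v))) w = f1 (u \<otimes> v) w"
    using f1_inv[of "u \<otimes> v" "transv (A #> (u \<otimes> v))" w w] transv_c transv_rcos c by simp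
  have t2: "f1 u (transv (A #> (v \<otimes> w))) = f1 u (v \<otimes> w)"
    using f1_inv[of u u "v \<otimes> w" "transv (A #> (v \<otimes> w))"] transv_c transv_rcos c by simp
  show "FF U V + FF (U \<otimes>\<^bsub>G Mod A\<^esub> V) W = FF V W + FF U (V \<otimes>\<^bsub>G Mod A\<^esub> W)"
    unfolding FF_def using UVW UV VW UVc t1 t2 cocD[OF f1_c c(1-3)] u_v_w_def by simp
qed

lemma inflf_FF: "inflf G (\<lambda>x. A #> x) FF = f1"
proof (intro ext)
  fix x y
  show "inflf G (\<lambda>x. A #> x) FF x y = f1 x y"
  proof (cases "x \<in> carrier G \<and> y \<in> carrier G")
    case True
    then show ?thesis unfolding inflf_def FF_def
      using pi_in_Q f1_inv[of x "transv (A #> x)" y "transv (A #> y)"] transv_c transv_rcos by auto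
  next
    case False
    then show ?thesis unfolding inflf_def f1_def cobm_def by auto
  qed
qed

end


context cp begin

lemma QS_elem:
  assumes S: "subgroup S G" "A \<subseteq> S" and U: "U \<in> carrier (G\<lparr>carrier := S\<rparr> Mod A)"
  shows "transv U \<in> S" "A #> transv U = U" "U \<in> carrier (G Mod A)" "transv U \<in> carrier G"
proof -
  obtain h where h: "h \<in> S" "U = A #> h" using U carrierQS by blast
  have hc: "h \<in> carrier G" using h S subgroup.subset by blast
  show "transv U \<in> S" using transv_alpha[OF hc] alpha_A[OF hc] S h subgroup.m_closed[OF S(1)] by auto
  show "A #> transv U = U" using transv_rcos[OF hc] h by simp
  show "U \<in> carrier (G Mod A)" using pi_in_Q[OF hc] h by simp
  show "transv U \<in> carrier G" using transv_c[OF hc] h by simp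
qed

lemma QS_sub: "subgroup S G \<Longrightarrow> A \<subseteq> S \<Longrightarrow> carrier (G\<lparr>carrier := S\<rparr> Mod A) \<subseteq> carrier (G Mod A)"
  using QS_elem by blast

lemma QS_mult:
  assumes S: "subgroup S G" "A \<subseteq> S" and U: "U \<in> carrier (G\<lparr>carrier := S\<rparr> Mod A)"
    and V: "V \<in> carrier (G\<lparr>carrier := S\<rparr> Mod A)"
  shows "U <#> V = A #> (transv U \<otimes> transv V)" "U <#> V \<in> carrier (G\<lparr>carrier := S\<rparr> Mod A)"
proof -
  have e: "U = A #> transv U" "V = A #> transv V" using QS_elem[OF S] U V by auto
  have c: "transv U \<in> carrier G" "transv V \<in> carrier G" using QS_elem[OF S] U V by auto
  show "U <#> V = A #> (transv U \<otimes> transv V)" using rcos_mult[OF c] e by metis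
  moreover have "transv U \<in> S" "transv V \<in> S" using QS_elem(1)[OF S] U V by auto
  then have "transv U \<otimes> transv V \<in> S" using subgroup.m_closed[OF S(1)] by simp
  ultimately show "U <#> V \<in> carrier (G\<lparr>carrier := S\<rparr> Mod A)" using carrierQS by auto
qed

lemma QS_subG: assumes S: "subgroup S G" "A \<subseteq> S" and U: "U \<in> carrier (G\<lparr>carrier := S\<rparr> Mod A)"
  shows "U \<subseteq> carrier G"
  using QS_elem(2,4)[OF S U] r_coset_subset_G[of A "transv U"] Ac by blast

lemma QS_assoc: assumes S: "subgroup S G" "A \<subseteq> S" and U: "U \<in> carrier (G\<lparr>carrier := S\<rparr> Mod A)"
    and V: "V \<in> carrier (G\<lparr>carrier := S\<rparr> Mod A)" and W: "W \<in> carrier (G\<lparr>carrier := S\<rparr> Mod A)"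
  shows "U <#> V <#> W = U <#> (V <#> W)"
  using set_mult_assoc QS_subG[OF S] U V W by blast

definition Tfun :: "'a set \<Rightarrow> ('a \<Rightarrow> 'd::ab_group_add) \<Rightarrow> 'a set \<Rightarrow> 'a set \<Rightarrow> 'd" where
  "Tfun S \<psi> U V = (if U \<in> carrier (G\<lparr>carrier := S\<rparr> Mod A) \<and> V \<in> carrier (G\<lparr>carrier := S\<rparr> Mod A)
     then \<psi> (transv U \<otimes> transv V \<otimes> inv (transv (U <#> V))) else 0)"

lemma tra_eq: assumes S: "subgroup S G" "A \<subseteq> S"
  shows "tra (G\<lparr>carrier := S\<rparr>) A \<psi> = cls (G\<lparr>carrier := S\<rparr> Mod A) (Tfun S \<psi>)"
proof -
  have "(\<lambda>U V. if U \<in> carrier (G\<lparr>carrier := S\<rparr> Mod A) \<and> V \<in> carrier (G\<lparr>carrier := S\<rparr> Mod A)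
        then \<psi> (transv U \<otimes>\<^bsub>G\<lparr>carrier := S\<rparr>\<^esub> transv V \<otimes>\<^bsub>G\<lparr>carrier := S\<rparr>\<^esub>
              inv\<^bsub>G\<lparr>carrier := S\<rparr>\<^esub> (transv (U <#>\<^bsub>G\<lparr>carrier := S\<rparr>\<^esub> V))) else 0) = Tfun S \<psi>"
  proof (intro ext)
    fix U V
    show "(if U \<in> carrier (G\<lparr>carrier := S\<rparr> Mod A) \<and> V \<in> carrier (G\<lparr>carrier := S\<rparr> Mod A)
        then \<psi> (transv U \<otimes>\<^bsub>G\<lparr>carrier := S\<rparr>\<^esub> transv V \<otimes>\<^bsub>G\<lparr>carrier := S\<rparr>\<^esub>
              inv\<^bsub>G\<lparr>carrier := S\<rparr>\<^esub> (transv (U <#>\<^bsub>G\<lparr>carrier := S\<rparr>\<^esub> V))) else 0) = Tfun S \<psi> U V"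
    proof (cases "U \<in> carrier (G\<lparr>carrier := S\<rparr> Mod A) \<and> V \<in> carrier (G\<lparr>carrier := S\<rparr> Mod A)")
      case True
      then have "transv (U <#> V) \<in> S" using QS_elem(1)[OF S QS_mult(2)[OF S]] by blast
      then show ?thesis unfolding Tfun_def using True m_inv_consistent[OF S(1)] by simp
    next
      case False show ?thesis unfolding Tfun_def if_not_P[OF False] by (rule refl)
    qed
  qed
  then show ?thesis unfolding tra_def by simp
qed

end

context desc begin

lemma cc_transv: assumes "U \<in> carrier (G Mod A)" shows "cc (transv U) = - f0 (transv U) \<one>"
  unfolding cc_def using Q_elem[OF assms] by simp

lemma side1:
  fixes c3 :: "'a \<Rightarrow> 'd"
  assumes S: "subgroup S G" "A \<subseteq> S" and dv: "divisible_ab TYPE('d)"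
    and c3: "\<And>x y. x\<in>S \<Longrightarrow> y\<in>S \<Longrightarrow> f0 x y = c3 y - c3 (x \<otimes> y) + c3 x"
    and c3h: "\<And>a b. a\<in>A \<Longrightarrow> b\<in>A \<Longrightarrow> c3 (a \<otimes> b) = c3 a + c3 b"
  shows "res2 (G\<lparr>carrier := S\<rparr> Mod A) (cls (G Mod A) FF) \<in> tra_res_image (G\<lparr>carrier := S\<rparr>) A"
proof -
  let ?GS = "G\<lparr>carrier := S\<rparr>"
  let ?QS = "?GS Mod A"
  have Sc: "S \<subseteq> carrier G" using S subgroup.subset by blast
  have sub: "carrier ?QS \<subseteq> carrier (G Mod A)" using QS_sub[OF S] .
  have cl: "\<And>U V. U \<in> carrier ?QS \<Longrightarrow> V \<in> carrier ?QS \<Longrightarrow> U \<otimes>\<^bsub>G Mod A\<^esub> V \<in> carrier ?QS"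
    using QS_mult(2)[OF S] by simp
  have mm: "\<And>U V. U \<otimes>\<^bsub>?QS\<^esub> V = U \<otimes>\<^bsub>G Mod A\<^esub> V" by simp
  have r: "res2 ?QS (cls (G Mod A) FF) = cls ?QS (restr (carrier ?QS) FF)"
    by (rule res2_eq[OF cls_in_H2[OF FF_c] self_in_cls[OF FF_c] sub cl mm])
  have der: "derived ?GS S = derived G S" using derived_consistent[OF _ S(1)] by blast
  define \<phi> where "\<phi> a = - c3 a" for a
  have c31: "c3 \<one> = 0" using c3h[OF A1 A1] by simp
  have phih: "addhom ?GS (A \<inter> derived ?GS S) \<phi>"
    unfolding addhom_def \<phi>_def using c3h by simp
  define P where "P \<psi> \<longleftrightarrow> addhom ?GS A \<psi> \<and> (\<forall>a \<in> A \<inter> derived ?GS (carrier ?GS). \<psi> a = \<phi> a)" for \<psi>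
  define \<psi> where "\<psi> = (SOME \<psi>. P \<psi>)"
  have "P \<phi>" unfolding P_def addhom_def \<phi>_def using c3h by simp
  then have P\<psi>: "P \<psi>" unfolding \<psi>_def by (metis someI_ex)
  have tr: "tra_res ?GS A \<phi> = tra ?GS A \<psi>" unfolding tra_res_def \<psi>_def P_def by simp
  have \<psi>h: "\<And>a b. a\<in>A \<Longrightarrow> b\<in>A \<Longrightarrow> \<psi> (a \<otimes> b) = \<psi> a + \<psi> b" using P\<psi> unfolding P_def addhom_def by simp
  have \<psi>d: "\<And>a. a\<in>A \<Longrightarrow> a \<in> derived G S \<Longrightarrow> \<psi> a = - c3 a" using P\<psi> der unfolding P_def \<phi>_def by simp
  have "\<exists>\<chi>. (\<forall>x\<in>S. \<forall>y\<in>S. \<chi>(x\<otimes>y) = \<chi> x + \<chi> y) \<and> (\<forall>b\<in>A. \<chi> b = \<psi> b + c3 b)"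
  proof (rule hom_extend[OF dv S(1) sA S(2)])
    fix x y assume "x \<in> A" "y \<in> A"
    then show "\<psi> (x \<otimes> y) + c3 (x \<otimes> y) = \<psi> x + c3 x + (\<psi> y + c3 y)"
      using \<psi>h c3h by (simp add: algebra_simps)
  next
    fix w assume "w \<in> A" "w \<in> derived G S"
    then show "\<psi> w + c3 w = 0" using \<psi>d by simp
  qed
  then obtain \<chi> where \<chi>: "(\<forall>x\<in>S. \<forall>y\<in>S. \<chi>(x\<otimes>y) = \<chi> x + \<chi> y) \<and> (\<forall>b\<in>A. \<chi> b = \<psi> b + c3 b)"
    by (elim exE)
  have \<chi>h: "\<And>x y. x\<in>S \<Longrightarrow> y\<in>S \<Longrightarrow> \<chi> (x \<otimes> y) = \<chi> x + \<chi> y" using \<chi> by simp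
  have \<chi>A: "\<And>a. a\<in>A \<Longrightarrow> \<chi> a = \<psi> a + c3 a" using \<chi> by simp
  define e where "e U = \<chi> (transv U) - c3 (transv U)" for U
  have key: "Tfun S \<psi> = cobm ?QS (restr (carrier ?QS) FF) (\<lambda>U. - e U)"
  proof (intro ext)
    fix U V
    show "Tfun S \<psi> U V = cobm ?QS (restr (carrier ?QS) FF) (\<lambda>U. - e U) U V"
    proof (cases "U \<in> carrier ?QS \<and> V \<in> carrier ?QS")
      case False then show ?thesis unfolding Tfun_def cobm_def by auto
    next
      case True
      then have U: "U \<in> carrier ?QS" and V: "V \<in> carrier ?QS" by auto
      define \<sigma> \<tau> \<rho> where "\<sigma> = transv U" "\<tau> = transv V" "\<rho> = transv (U <#> V)"
      have UV: "U <#> V \<in> carrier ?QS" using QS_mult(2)[OF S U V] .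
      have sS: "\<sigma> \<in> S" "\<tau> \<in> S" "\<rho> \<in> S" using QS_elem(1)[OF S] U V UV unfolding \<sigma>_\<tau>_\<rho>_def by auto
      have sc: "\<sigma> \<in> carrier G" "\<tau> \<in> carrier G" "\<rho> \<in> carrier G" using sS Sc by auto
      have pU: "A #> \<sigma> = U" "A #> \<tau> = V" using QS_elem(2)[OF S] U V unfolding \<sigma>_\<tau>_\<rho>_def by auto
      have pUV: "A #> (\<sigma> \<otimes> \<tau>) = U <#> V" using QS_mult(1)[OF S U V] unfolding \<sigma>_\<tau>_\<rho>_def by simp
      have \<rho>def: "\<rho> = transv (A #> (\<sigma> \<otimes> \<tau>))" using pUV unfolding \<sigma>_\<tau>_\<rho>_def by simp
      define g where "g = \<sigma> \<otimes> \<tau> \<otimes> inv \<rho>"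
      have gA: "g \<in> A"
      proof -
        have "g = alpha \<sigma> \<otimes> alpha \<tau> \<otimes> inv (alpha (\<sigma> \<otimes> \<tau>))"
          using tr_calc[OF sc(1,2)] pU unfolding g_def \<rho>def \<sigma>_\<tau>_\<rho>_def by simp
        then show ?thesis using alpha_A sc Am Ai by simp
      qed
      have gc: "g \<in> carrier G" using Ac gA .
      have gS: "g \<in> S" using gA S by blast
      have \<rho>g: "\<rho> \<otimes> g = \<sigma> \<otimes> \<tau>"
      proof -
        have "\<rho> \<otimes> g = g \<otimes> \<rho>" using central[OF gA sc(3)] by simp
        then show ?thesis unfolding g_def using sc by (simp add: m_assoc)
      qed
      have \<rho>g2: "inv \<rho> \<otimes> (\<sigma> \<otimes> \<tau>) = g" using \<rho>g[symmetric] sc gc by simp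
      have Q: "U \<in> carrier (G Mod A)" "V \<in> carrier (G Mod A)" "U <#> V \<in> carrier (G Mod A)"
        using sub U V UV by auto
      have ccs: "cc \<sigma> = 0" "cc \<tau> = 0"
        using cc_transv[OF Q(1)] cc_transv[OF Q(2)] c3[OF sS(1) subgroup.one_closed[OF S(1)]]
          c3[OF sS(2) subgroup.one_closed[OF S(1)]] c31 sc unfolding \<sigma>_\<tau>_\<rho>_def by simp_all
      have ccst: "cc (\<sigma> \<otimes> \<tau>) = - (c3 g - c3 (\<sigma> \<otimes> \<tau>) + c3 \<rho>)"
      proof -
        have "cc (\<sigma> \<otimes> \<tau>) = - f0 \<rho> g" unfolding cc_def using \<rho>def \<rho>g2 by simp
        also have "\<dots> = - (c3 g - c3 (\<sigma> \<otimes> \<tau>) + c3 \<rho>)" using c3[OF sS(3) gS] \<rho>g by simp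
        finally show ?thesis .
      qed
      have FFUV: "FF U V = c3 \<tau> + c3 \<sigma> - c3 g - c3 \<rho>"
      proof -
        have "FF U V = f1 \<sigma> \<tau>" unfolding FF_def \<sigma>_\<tau>_\<rho>_def using Q by simp
        also have "\<dots> = f0 \<sigma> \<tau> - (cc \<tau> - cc (\<sigma> \<otimes> \<tau>) + cc \<sigma>)" unfolding f1_def cobm_def using sc by simp
        also have "\<dots> = c3 \<tau> + c3 \<sigma> - c3 g - c3 \<rho>" using c3[OF sS(1,2)] ccs ccst by (simp add: algebra_simps)
        finally show ?thesis .
      qed
      have \<psi>g: "\<psi> g = \<chi> \<sigma> + \<chi> \<tau> - \<chi> \<rho> - c3 g"
      proof -
        have "\<chi> \<sigma> + \<chi> \<tau> = \<chi> \<rho> + \<chi> g" using \<chi>h[OF sS(1,2)] \<chi>h[OF sS(3) gS] \<rho>g by simp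
        then show ?thesis using \<chi>A[OF gA] by (simp add: algebra_simps)
      qed
      have "Tfun S \<psi> U V = \<psi> g" unfolding Tfun_def g_def \<sigma>_\<tau>_\<rho>_def using U V by simp
      also have "\<dots> = FF U V + e V - e (U <#> V) + e U"
      proof -
        have eU: "e U = \<chi> \<sigma> - c3 \<sigma>" "e V = \<chi> \<tau> - c3 \<tau>" "e (U <#> V) = \<chi> \<rho> - c3 \<rho>"
          unfolding e_def \<sigma>_\<tau>_\<rho>_def by simp_all
        show ?thesis unfolding \<psi>g FFUV eU by (simp add: algebra_simps)
      qed
      also have "\<dots> = cobm ?QS (restr (carrier ?QS) FF) (\<lambda>U. - e U) U V"
        unfolding cobm_def restr_def using U V UV by (simp add: algebra_simps)
      finally show ?thesis .
    qed
  qed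
  have rc: "restr (carrier ?QS) FF \<in> cocycles2 ?QS"
    by (rule restr_coc[OF FF_c sub cl mm])
  have "(restr (carrier ?QS) FF, cobm ?QS (restr (carrier ?QS) FF) (\<lambda>U. - e U)) \<in> cohom_rel ?QS"
    by (rule cobm_rel[OF rc]) (use QS_mult(2)[OF S] QS_assoc[OF S] in auto)
  then have e1: "cls ?QS (restr (carrier ?QS) FF) = cls ?QS (cobm ?QS (restr (carrier ?QS) FF) (\<lambda>U. - e U))"
    by (rule cls_eqI)
  have "res2 ?QS (cls (G Mod A) FF) = tra_res ?GS A \<phi>"
    unfolding r e1 key[symmetric] tr tra_eq[OF S] ..
  moreover have "\<phi> \<in> {\<phi>. addhom ?GS (A \<inter> derived ?GS (carrier ?GS)) \<phi>}" using phih by simp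
  ultimately show ?thesis unfolding tra_res_image_def by (rule image_eqI)
qed

end


lemma in_cls_rel: "g \<in> cls G f \<Longrightarrow> (g, f) \<in> cohom_rel G"
  unfolding cls_def using equiv_cohom[of G] by (auto simp: equiv_def sym_def)

context cp begin

lemma infl_eq: "infl G A \<eta> = cls G (inflf G (\<lambda>x. A #> x) (rep \<eta>))"
  unfolding infl_def inflf_def by simp

lemma inflf_c: "F \<in> cocycles2 (G Mod A) \<Longrightarrow> inflf G (\<lambda>x. A #> x) F \<in> cocycles2 G"
  by (rule inflf_coc) (use pi_in_Q pi_mult in auto)

lemma dir1:
  fixes \<xi> :: "('a \<Rightarrow> 'a \<Rightarrow> 'd::ab_group_add) set"
  assumes dv: "divisible_ab TYPE('d)" and xi: "\<xi> \<in> H2 G"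
    and th: "theta3 (G\<lparr>carrier := H\<rparr>) (G\<lparr>carrier := K\<rparr>) \<xi>
              = (cls (G\<lparr>carrier := H\<rparr>) (\<lambda>_ _. 0), cls (G\<lparr>carrier := K\<rparr>) (\<lambda>_ _. 0), (\<lambda>_ _. 0))"
  shows "\<xi> \<in> infl G A ` {\<eta> \<in> H2 (G Mod A).
              \<exists>x \<in> tra_res_image (G\<lparr>carrier := H\<rparr>) A.
              \<exists>y \<in> tra_res_image (G\<lparr>carrier := K\<rparr>) A.
                theta3 (G\<lparr>carrier := H\<rparr> Mod A) (G\<lparr>carrier := K\<rparr> Mod A) \<eta>
                  = (x, y, (\<lambda>_ _. 0))}"
proof -
  define f where "f = rep \<xi>"
  have fc: "f \<in> cocycles2 G" and \<xi>eq: "\<xi> = cls G f" using H2_rep[OF xi] unfolding f_def by auto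
  have resS: "\<exists>c. \<forall>x\<in>S. \<forall>y\<in>S. f x y = c y - c (x \<otimes> y) + c x"
    if S: "subgroup S G" and r: "res2 (G\<lparr>carrier := S\<rparr>) \<xi> = cls (G\<lparr>carrier := S\<rparr>) (\<lambda>_ _. 0)" for S
  proof -
    have Sc: "S \<subseteq> carrier G" using S subgroup.subset by blast
    have rc: "restr S f \<in> cocycles2 (G\<lparr>carrier := S\<rparr>)"
      using restr_coc[OF fc, of "G\<lparr>carrier := S\<rparr>"] Sc subgroup.m_closed[OF S] by simp
    have "cls (G\<lparr>carrier := S\<rparr>) (restr S f) = cls (G\<lparr>carrier := S\<rparr>) (\<lambda>_ _. 0)"
      using r unfolding res2_restr f_def by simp
    then have "(restr S f, \<lambda>_ _. 0) \<in> cohom_rel (G\<lparr>carrier := S\<rparr>)" using cls_eqD[OF rc] by blast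
    then obtain c where "\<And>x y. x\<in>S \<Longrightarrow> y\<in>S \<Longrightarrow> restr S f x y - 0 = c y - c (x \<otimes> y) + c x"
      by (auto simp: rel_iff)
    then show ?thesis unfolding restr_def by auto
  qed
  obtain c1 where c1: "\<And>x y. x\<in>H \<Longrightarrow> y\<in>H \<Longrightarrow> f x y = c1 y - c1 (x \<otimes> y) + c1 x"
    using resS[OF sH] th unfolding theta3_def by auto
  obtain c2 where c2: "\<And>x y. x\<in>K \<Longrightarrow> y\<in>K \<Longrightarrow> f x y = c2 y - c2 (x \<otimes> y) + c2 x"
    using resS[OF sK] th unfolding theta3_def by auto
  have fnu: "f h k - f k h = 0" if "h \<in> H" "k \<in> K" for h k
  proof -
    have "nu H K \<xi> h k = 0" using th unfolding theta3_def by simp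
    then show ?thesis using that unfolding nu_def f_def by simp
  qed
  define f0 where "f0 = cobm G f c1"
  have f0c: "f0 \<in> cocycles2 G" unfolding f0_def by (rule cobm_coc[OF fc]) (auto simp: m_assoc)
  have ff0: "(f, f0) \<in> cohom_rel G" unfolding f0_def by (rule cobm_rel[OF fc]) (auto simp: m_assoc)
  have f0H: "f0 x y = 0" if "x \<in> H" "y \<in> H" for x y
    using that c1 Hc unfolding f0_def cobm_def by auto
  define c3 where "c3 z = c2 z - c1 z" for z
  have f0K: "f0 x y = c3 y - c3 (x \<otimes> y) + c3 x" if "x \<in> K" "y \<in> K" for x y
    using that c2 Kc unfolding f0_def cobm_def c3_def by (auto simp: algebra_simps)
  have f0A: "f0 a b = 0" if "a \<in> A" "b \<in> A" for a b using f0H that by blast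
  have pz: "f0 a x = f0 x a" if "a \<in> A" "x \<in> carrier G" for a x
    using pair_zero[OF f0c f0H f0K that] by blast
  interpret d: desc G H K f0 by unfold_locales (use f0c f0A pz in auto)
  define \<eta> where "\<eta> = cls (G Mod A) d.FF"
  have \<eta>H2: "\<eta> \<in> H2 (G Mod A)" unfolding \<eta>_def by (rule cls_in_H2[OF d.FF_c])
  have repF: "(rep \<eta>, d.FF) \<in> cohom_rel (G Mod A)"
    using in_cls_rel H2_rep(1)[OF \<eta>H2] unfolding \<eta>_def by blast
  have "infl G A \<eta> = \<xi>"
  proof -
    have "(inflf G (\<lambda>x. A #> x) (rep \<eta>), inflf G (\<lambda>x. A #> x) d.FF) \<in> cohom_rel G"
      by (rule inflf_rel[OF repF]) (use pi_in_Q pi_mult in auto)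
    then have "infl G A \<eta> = cls G d.f1" unfolding infl_eq d.inflf_FF by (rule cls_eqI)
    also have "\<dots> = cls G f0" using cls_eqI[OF d.f1_rel] by simp
    also have "\<dots> = cls G f" using cls_eqI[OF ff0] by simp
    finally show ?thesis using \<xi>eq by simp
  qed
  have c3h: "c3 (a \<otimes> b) = c3 a + c3 b" if "a \<in> A" "b \<in> A" for a b
  proof -
    have "0 = c3 b - c3 (a \<otimes> b) + c3 a" using f0K[of a b] f0A[OF that] that by simp
    then show ?thesis by (simp add: algebra_simps)
  qed
  have xH: "res2 (G\<lparr>carrier := H\<rparr> Mod A) \<eta> \<in> tra_res_image (G\<lparr>carrier := H\<rparr>) A"
    unfolding \<eta>_def by (rule d.side1[OF sH _ dv, of "\<lambda>_. 0"]) (use f0H in auto)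
  have xK: "res2 (G\<lparr>carrier := K\<rparr> Mod A) \<eta> \<in> tra_res_image (G\<lparr>carrier := K\<rparr>) A"
    unfolding \<eta>_def by (rule d.side1[OF sK _ dv f0K c3h]) auto
  have nu\<eta>: "nu (carrier (G\<lparr>carrier := H\<rparr> Mod A)) (carrier (G\<lparr>carrier := K\<rparr> Mod A)) \<eta> = (\<lambda>_ _. 0)"
  proof (intro ext)
    fix U V
    show "nu (carrier (G\<lparr>carrier := H\<rparr> Mod A)) (carrier (G\<lparr>carrier := K\<rparr> Mod A)) \<eta> U V = 0"
    proof (cases "U \<in> carrier (G\<lparr>carrier := H\<rparr> Mod A) \<and> V \<in> carrier (G\<lparr>carrier := K\<rparr> Mod A)")
      case False then show ?thesis unfolding nu_def by auto
    next
      case True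
      then have U: "U \<in> carrier (G\<lparr>carrier := H\<rparr> Mod A)" and V: "V \<in> carrier (G\<lparr>carrier := K\<rparr> Mod A)" by auto
      have AH: "A \<subseteq> H" and AK: "A \<subseteq> K" by auto
      define \<sigma> \<tau> where "\<sigma> = transv U" "\<tau> = transv V"
      have st: "\<sigma> \<in> H" "\<tau> \<in> K" "A #> \<sigma> = U" "A #> \<tau> = V" "U \<in> carrier (G Mod A)" "V \<in> carrier (G Mod A)"
        using QS_elem[OF sH AH U] QS_elem[OF sK AK V] unfolding \<sigma>_\<tau>_def by auto
      have sc: "\<sigma> \<in> carrier G" "\<tau> \<in> carrier G" using st Hc Kc by auto
      have comm: "\<sigma> \<otimes> \<tau> = \<tau> \<otimes> \<sigma>" using cm st by blast
      have UV: "U \<otimes>\<^bsub>G Mod A\<^esub> V = V \<otimes>\<^bsub>G Mod A\<^esub> U"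
        using pi_mult[OF sc] pi_mult[OF sc(2,1)] st comm by metis
      have "rep \<eta> U V - rep \<eta> V U = d.FF U V - d.FF V U"
        by (rule rel_anti[OF repF st(5,6) UV])
      also have "\<dots> = d.f1 \<sigma> \<tau> - d.f1 \<tau> \<sigma>" unfolding d.FF_def \<sigma>_\<tau>_def using st by simp
      also have "\<dots> = f0 \<sigma> \<tau> - f0 \<tau> \<sigma>" unfolding d.f1_def by (rule cobm_anti[OF sc comm])
      also have "\<dots> = f \<sigma> \<tau> - f \<tau> \<sigma>" unfolding f0_def by (rule cobm_anti[OF sc comm])
      also have "\<dots> = 0" using fnu st by simp
      finally show ?thesis unfolding nu_def using U V by simp
    qed
  qed
  have "theta3 (G\<lparr>carrier := H\<rparr> Mod A) (G\<lparr>carrier := K\<rparr> Mod A) \<eta>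
     = (res2 (G\<lparr>carrier := H\<rparr> Mod A) \<eta>, res2 (G\<lparr>carrier := K\<rparr> Mod A) \<eta>, (\<lambda>_ _. 0))"
    unfolding theta3_def using nu\<eta> by simp
  then show ?thesis using \<eta>H2 xH xK \<open>infl G A \<eta> = \<xi>\<close> by (auto intro!: image_eqI[of \<xi> _ \<eta>])
qed

end


context cp begin

lemma side2:
  fixes \<eta> :: "('a set \<Rightarrow> 'a set \<Rightarrow> 'd::ab_group_add) set"
  assumes S: "subgroup S G" "A \<subseteq> S" and dv: "divisible_ab TYPE('d)"
    and eta: "\<eta> \<in> H2 (G Mod A)"
    and xr: "res2 (G\<lparr>carrier := S\<rparr> Mod A) \<eta> \<in> tra_res_image (G\<lparr>carrier := S\<rparr>) A"
  shows "res2 (G\<lparr>carrier := S\<rparr>) (infl G A \<eta>) = cls (G\<lparr>carrier := S\<rparr>) (\<lambda>_ _. 0)"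
proof -
  let ?GS = "G\<lparr>carrier := S\<rparr>"
  let ?QS = "?GS Mod A"
  let ?p = "\<lambda>x. A #> x"
  define F where "F = rep \<eta>"
  have Fc: "F \<in> cocycles2 (G Mod A)" using H2_rep[OF eta] unfolding F_def by blast
  have Sc: "S \<subseteq> carrier G" using S subgroup.subset by blast
  define fI where "fI = inflf G ?p F"
  have fIc: "fI \<in> cocycles2 G" unfolding fI_def by (rule inflf_c[OF Fc])
  have ieq: "infl G A \<eta> = cls G fI" unfolding fI_def F_def by (rule infl_eq)
  have r1: "res2 ?GS (infl G A \<eta>) = cls ?GS (restr S fI)"
    using res2_eq[OF cls_in_H2[OF fIc] self_in_cls[OF fIc], of ?GS] Sc subgroup.m_closed[OF S(1)] ieq
    by simp
  have sub: "carrier ?QS \<subseteq> carrier (G Mod A)" using QS_sub[OF S] .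
  have cl: "\<And>U V. U \<in> carrier ?QS \<Longrightarrow> V \<in> carrier ?QS \<Longrightarrow> U \<otimes>\<^bsub>G Mod A\<^esub> V \<in> carrier ?QS"
    using QS_mult(2)[OF S] by simp
  have mm: "\<And>U V. U \<otimes>\<^bsub>?QS\<^esub> V = U \<otimes>\<^bsub>G Mod A\<^esub> V" by simp
  have der: "derived ?GS S = derived G S" using derived_consistent[OF _ S(1)] by blast
  obtain \<phi> where \<phi>h: "addhom ?GS (A \<inter> derived ?GS (carrier ?GS)) \<phi>"
    and \<phi>eq: "res2 ?QS \<eta> = tra_res ?GS A \<phi>"
    using xr unfolding tra_res_image_def by blast
  have \<phi>h': "\<And>a b. a \<in> A \<inter> derived G S \<Longrightarrow> b \<in> A \<inter> derived G S \<Longrightarrow> \<phi> (a \<otimes> b) = \<phi> a + \<phi> b"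
    using \<phi>h der unfolding addhom_def by simp
  define P where "P \<psi> \<longleftrightarrow> addhom ?GS A \<psi> \<and> (\<forall>a \<in> A \<inter> derived ?GS (carrier ?GS). \<psi> a = \<phi> a)" for \<psi>
  define \<psi> where "\<psi> = (SOME \<psi>. P \<psi>)"
  have B: "subgroup (A \<inter> derived G S) G"
    using subgroups_Inter_pair[OF sA derived_is_subgroup[OF Sc]] .
  have "\<exists>\<chi>. (\<forall>x\<in>A. \<forall>y\<in>A. \<chi>(x\<otimes>y) = \<chi> x + \<chi> y) \<and> (\<forall>b\<in>A \<inter> derived G S. \<chi> b = \<phi> b)"
  proof (rule hom_extend[OF dv sA B])
    show "A \<inter> derived G S \<subseteq> A" by blast
    fix x y assume "x \<in> A \<inter> derived G S" "y \<in> A \<inter> derived G S"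
    then show "\<phi> (x \<otimes> y) = \<phi> x + \<phi> y" using \<phi>h' by blast
  next
    fix w assume w: "w \<in> A \<inter> derived G S" "w \<in> derived G A"
    then have "w = \<one>" using derived_A by blast
    moreover have "\<phi> \<one> = \<phi> \<one> + \<phi> \<one>" using \<phi>h'[of \<one> \<one>] subgroup.one_closed[OF B] by simp
    ultimately show "\<phi> w = 0" by simp
  qed
  then obtain \<chi>0 where "(\<forall>x\<in>A. \<forall>y\<in>A. \<chi>0(x\<otimes>y) = \<chi>0 x + \<chi>0 y) \<and> (\<forall>b\<in>A \<inter> derived G S. \<chi>0 b = \<phi> b)"
    by (elim exE)
  then have "P \<chi>0" unfolding P_def addhom_def using der by simp
  then have P\<psi>: "P \<psi>" unfolding \<psi>_def by (metis someI_ex)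
  have tr: "tra_res ?GS A \<phi> = tra ?GS A \<psi>" unfolding tra_res_def \<psi>_def P_def by simp
  have \<psi>h: "\<And>a b. a\<in>A \<Longrightarrow> b\<in>A \<Longrightarrow> \<psi> (a \<otimes> b) = \<psi> a + \<psi> b" using P\<psi> unfolding P_def addhom_def by simp
  have \<psi>1: "\<psi> \<one> = 0" using \<psi>h[OF A1 A1] by simp
  have \<psi>inv: "\<And>a. a \<in> A \<Longrightarrow> \<psi> (inv a) = - \<psi> a"
  proof -
    fix a assume a: "a \<in> A"
    have "\<psi> (a \<otimes> inv a) = \<psi> a + \<psi> (inv a)" using \<psi>h[OF a Ai[OF a]] .
    then have "\<psi> a + \<psi> (inv a) = 0" using \<psi>1 a Ac by simp
    then show "\<psi> (inv a) = - \<psi> a" by (simp add: eq_neg_iff_add_eq_0 add.commute)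
  qed
  have rF: "restr (carrier ?QS) F \<in> cocycles2 ?QS" by (rule restr_coc[OF Fc sub cl mm])
  have "cls ?QS (restr (carrier ?QS) F) = cls ?QS (Tfun S \<psi>)"
    using \<phi>eq tr tra_eq[OF S, of \<psi>] unfolding res2_restr F_def by simp
  then have "(restr (carrier ?QS) F, Tfun S \<psi>) \<in> cohom_rel ?QS" using cls_eqD[OF rF] by blast
  then obtain c where c: "\<And>U V. U \<in> carrier ?QS \<Longrightarrow> V \<in> carrier ?QS \<Longrightarrow>
      restr (carrier ?QS) F U V - Tfun S \<psi> U V = c V - c (U \<otimes>\<^bsub>?QS\<^esub> V) + c U"
    by (metis relE)
  define e where "e h = \<psi> (alpha h) + c (A #> h)" for h
  have "(restr S fI, \<lambda>_ _. 0) \<in> cohom_rel ?GS"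
  proof (rule relI[where c=e])
    show "restr S fI \<in> cocycles2 ?GS"
      using restr_coc[OF fIc, of ?GS] Sc subgroup.m_closed[OF S(1)] by simp
    show "(\<lambda>_ _. 0) \<in> cocycles2 ?GS" by (rule zero_coc)
    fix h h' assume hh: "h \<in> carrier ?GS" "h' \<in> carrier ?GS"
    then have h: "h \<in> S" "h' \<in> S" by auto
    have hc: "h \<in> carrier G" "h' \<in> carrier G" "h \<otimes> h' \<in> carrier G" using h Sc by auto
    have U: "A #> h \<in> carrier ?QS" "A #> h' \<in> carrier ?QS" using h carrierQS by auto
    have UU: "(A #> h) <#> (A #> h') = A #> (h \<otimes> h')" using rcos_mult hc by simp
    have al: "alpha h \<in> A" "alpha h' \<in> A" "alpha (h \<otimes> h') \<in> A" using alpha_A hc by auto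
    have T: "Tfun S \<psi> (A #> h) (A #> h') = \<psi> (alpha h) + \<psi> (alpha h') - \<psi> (alpha (h \<otimes> h'))"
    proof -
      have "Tfun S \<psi> (A #> h) (A #> h') = \<psi> (alpha h \<otimes> alpha h' \<otimes> inv (alpha (h \<otimes> h')))"
        unfolding Tfun_def using U UU tr_calc[OF hc(1,2)] by simp
      also have "\<dots> = \<psi> (alpha h) + \<psi> (alpha h') - \<psi> (alpha (h \<otimes> h'))"
        using \<psi>h[OF Am[OF al(1,2)] Ai[OF al(3)]] \<psi>h[OF al(1,2)] \<psi>inv[OF al(3)] by simp
      finally show ?thesis .
    qed
    have "restr S fI h h' = F (A #> h) (A #> h')" unfolding restr_def fI_def inflf_def using h hc by simp
    also have "\<dots> = Tfun S \<psi> (A #> h) (A #> h') + (c (A #> h') - c (A #> (h \<otimes> h')) + c (A #> h))"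
      using c[OF U] UU U unfolding restr_def by (simp add: algebra_simps)
    also have "\<dots> = e h' - e (h \<otimes> h') + e h" unfolding T e_def by (simp add: algebra_simps)
    finally show "restr S fI h h' - 0 = e h' - e (h \<otimes>\<^bsub>?GS\<^esub> h') + e h" by simp
  qed
  then show ?thesis using r1 cls_eqI by metis
qed

lemma dir2:
  fixes \<eta> :: "('a set \<Rightarrow> 'a set \<Rightarrow> 'd::ab_group_add) set"
  assumes dv: "divisible_ab TYPE('d)" and eta: "\<eta> \<in> H2 (G Mod A)"
    and x: "x \<in> tra_res_image (G\<lparr>carrier := H\<rparr>) A" and y: "y \<in> tra_res_image (G\<lparr>carrier := K\<rparr>) A"
    and th: "theta3 (G\<lparr>carrier := H\<rparr> Mod A) (G\<lparr>carrier := K\<rparr> Mod A) \<eta> = (x, y, (\<lambda>_ _. 0))"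
  shows "infl G A \<eta> \<in> H2 G \<and> theta3 (G\<lparr>carrier := H\<rparr>) (G\<lparr>carrier := K\<rparr>) (infl G A \<eta>)
              = (cls (G\<lparr>carrier := H\<rparr>) (\<lambda>_ _. 0), cls (G\<lparr>carrier := K\<rparr>) (\<lambda>_ _. 0), (\<lambda>_ _. 0))"
proof -
  define F where "F = rep \<eta>"
  have Fc: "F \<in> cocycles2 (G Mod A)" using H2_rep[OF eta] unfolding F_def by blast
  define fI where "fI = inflf G (\<lambda>x. A #> x) F"
  have fIc: "fI \<in> cocycles2 G" unfolding fI_def by (rule inflf_c[OF Fc])
  have ieq: "infl G A \<eta> = cls G fI" unfolding fI_def F_def by (rule infl_eq)
  have H2i: "infl G A \<eta> \<in> H2 G" using ieq cls_in_H2[OF fIc] by simp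
  have rH: "res2 (G\<lparr>carrier := H\<rparr> Mod A) \<eta> = x" and rK: "res2 (G\<lparr>carrier := K\<rparr> Mod A) \<eta> = y"
    and n: "nu (carrier (G\<lparr>carrier := H\<rparr> Mod A)) (carrier (G\<lparr>carrier := K\<rparr> Mod A)) \<eta> = (\<lambda>_ _. 0)"
    using th unfolding theta3_def by simp_all
  have sH2: "res2 (G\<lparr>carrier := H\<rparr>) (infl G A \<eta>) = cls (G\<lparr>carrier := H\<rparr>) (\<lambda>_ _. 0)"
    by (rule side2[OF sH _ dv eta]) (use rH x in auto)
  have sK2: "res2 (G\<lparr>carrier := K\<rparr>) (infl G A \<eta>) = cls (G\<lparr>carrier := K\<rparr>) (\<lambda>_ _. 0)"
    by (rule side2[OF sK _ dv eta]) (use rK y in auto)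
  have nu0: "nu H K (infl G A \<eta>) = (\<lambda>_ _. 0)"
  proof (intro ext)
    fix h k
    show "nu H K (infl G A \<eta>) h k = 0"
    proof (cases "h \<in> H \<and> k \<in> K")
      case False then show ?thesis unfolding nu_def by auto
    next
      case True
      then have hk: "h \<in> H" "k \<in> K" by auto
      have hc: "h \<in> carrier G" "k \<in> carrier G" using hk Hc Kc by auto
      have comm: "h \<otimes> k = k \<otimes> h" using cm hk by blast
      have rr: "(fI, rep (infl G A \<eta>)) \<in> cohom_rel G"
        using in_cls_rel[of "rep (infl G A \<eta>)" G fI] H2_rep(1)[OF H2i] ieq cls_def
        by (metis (no_types, lifting) Image_singleton_iff)
      have U: "A #> h \<in> carrier (G\<lparr>carrier := H\<rparr> Mod A)" "A #> k \<in> carrier (G\<lparr>carrier := K\<rparr> Mod A)"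
        using hk carrierQS by auto
      have "rep (infl G A \<eta>) h k - rep (infl G A \<eta>) k h = fI h k - fI k h"
        using rel_anti[OF rr hc comm] by simp
      also have "\<dots> = F (A #> h) (A #> k) - F (A #> k) (A #> h)"
        unfolding fI_def inflf_def using hc by simp
      also have "\<dots> = 0" using fun_cong[OF fun_cong[OF n, of "A #> h"], of "A #> k"] U
        unfolding nu_def F_def by simp
      finally show ?thesis unfolding nu_def using hk by simp
    qed
  qed
  show ?thesis using H2i sH2 sK2 nu0 unfolding theta3_def by simp
qed

end

theorem lemma3p2:
  fixes G :: "('a,'m) monoid_scheme" and H K :: "'a set"
  assumes "group G"
    and "H \<lhd> G" and "K \<lhd> G"
    and "H <#>\<^bsub>G\<^esub> K = carrier G"
    and "\<forall>h\<in>H. \<forall>k\<in>K. h \<otimes>\<^bsub>G\<^esub> k = k \<otimes>\<^bsub>G\<^esub> h"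
    and "divisible_ab TYPE('d::ab_group_add)"
  shows "{\<xi> \<in> (H2 G :: ('a \<Rightarrow> 'a \<Rightarrow> 'd) set set).
            theta3 (G\<lparr>carrier := H\<rparr>) (G\<lparr>carrier := K\<rparr>) \<xi>
              = (cls (G\<lparr>carrier := H\<rparr>) (\<lambda>_ _. 0), cls (G\<lparr>carrier := K\<rparr>) (\<lambda>_ _. 0), (\<lambda>_ _. 0))}
       = infl G (H \<inter> K) `
           {\<eta> \<in> H2 (G Mod (H \<inter> K)).
              \<exists>x \<in> tra_res_image (G\<lparr>carrier := H\<rparr>) (H \<inter> K).
              \<exists>y \<in> tra_res_image (G\<lparr>carrier := K\<rparr>) (H \<inter> K).
                theta3 (G\<lparr>carrier := H\<rparr> Mod (H \<inter> K)) (G\<lparr>carrier := K\<rparr> Mod (H \<inter> K)) \<eta>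
                  = (x, y, (\<lambda>_ _. 0))}"
proof -
  interpret cp G H K
    by (rule cp.intro[OF assms(1)]) (rule cp_axioms.intro, use assms(2-5) in auto)
  show ?thesis
  proof
    show "{\<xi> \<in> (H2 G :: ('a \<Rightarrow> 'a \<Rightarrow> 'd) set set).
            theta3 (G\<lparr>carrier := H\<rparr>) (G\<lparr>carrier := K\<rparr>) \<xi>
              = (cls (G\<lparr>carrier := H\<rparr>) (\<lambda>_ _. 0), cls (G\<lparr>carrier := K\<rparr>) (\<lambda>_ _. 0), (\<lambda>_ _. 0))}
       \<subseteq> infl G (H \<inter> K) `
           {\<eta> \<in> H2 (G Mod (H \<inter> K)).
              \<exists>x \<in> tra_res_image (G\<lparr>carrier := H\<rparr>) (H \<inter> K).
              \<exists>y \<in> tra_res_image (G\<lparr>carrier := K\<rparr>) (H \<inter> K).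
                theta3 (G\<lparr>carrier := H\<rparr> Mod (H \<inter> K)) (G\<lparr>carrier := K\<rparr> Mod (H \<inter> K)) \<eta>
                  = (x, y, (\<lambda>_ _. 0))}"
      using dir1[OF assms(6)] by blast
  next
    show "infl G (H \<inter> K) `
           {\<eta> \<in> H2 (G Mod (H \<inter> K)).
              \<exists>x \<in> tra_res_image (G\<lparr>carrier := H\<rparr>) (H \<inter> K).
              \<exists>y \<in> tra_res_image (G\<lparr>carrier := K\<rparr>) (H \<inter> K).
                theta3 (G\<lparr>carrier := H\<rparr> Mod (H \<inter> K)) (G\<lparr>carrier := K\<rparr> Mod (H \<inter> K)) \<eta>
                  = (x, y, (\<lambda>_ _. 0))}
       \<subseteq> {\<xi> \<in> (H2 G :: ('a \<Rightarrow> 'a \<Rightarrow> 'd) set set).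
            theta3 (G\<lparr>carrier := H\<rparr>) (G\<lparr>carrier := K\<rparr>) \<xi>
              = (cls (G\<lparr>carrier := H\<rparr>) (\<lambda>_ _. 0), cls (G\<lparr>carrier := K\<rparr>) (\<lambda>_ _. 0), (\<lambda>_ _. 0))}"
      using dir2[OF assms(6)] by blast
  qed
qed

end
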